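(* A strongly regular graph with parameters $(76,30,8,14)$ does not contain a $16$-coclique (a set of $16$ pairwise non-adjacent vertices) as an induced subgraph.
   Context: A graph is strongly regular with parameters $(v,k,\lambda,\mu)$ if it has $v$ vertices, is $k$-regular, adjacent vertices have exactly $\lambda$ common neighbours and distinct non-adjacent vertices have exactly $\mu$ common neighbours. *)

theory Defs
  imports Main
begin

definition simple_graph :: "'a set \<Rightarrow> ('a \<Rightarrow> 'a \<Rightarrow> bool) \<Rightarrow> bool" where
  "simple_graph V E \<longleftrightarrow> finite V \<and>
     (\<forall>x y. E x y \<longrightarrow> x \<in> V \<and> y \<in> V) \<and>
     (\<forall>x y. E x y \<longrightarrow> E y x) \<and> (\<forall>x. \<not> E x x)"

definition nbhd :: "'a set \<Rightarrow> ('a \<Rightarrow> 'a \<Rightarrow> bool) \<Rightarrow> 'a \<Rightarrow> 'a set" where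
  "nbhd V E x = {y \<in> V. E x y}"

definition strongly_regular ::
  "'a set \<Rightarrow> ('a \<Rightarrow> 'a \<Rightarrow> bool) \<Rightarrow> nat \<Rightarrow> nat \<Rightarrow> nat \<Rightarrow> nat \<Rightarrow> bool" where
  "strongly_regular V E v k lam mu \<longleftrightarrow> simple_graph V E \<and> card V = v \<and>
     (\<forall>x\<in>V. card (nbhd V E x) = k) \<and>
     (\<forall>x\<in>V. \<forall>y\<in>V. E x y \<longrightarrow> card (nbhd V E x \<inter> nbhd V E y) = lam) \<and>
     (\<forall>x\<in>V. \<forall>y\<in>V. x \<noteq> y \<longrightarrow> \<not> E x y \<longrightarrow> card (nbhd V E x \<inter> nbhd V E y) = mu)"

definition coclique :: "'a set \<Rightarrow> ('a \<Rightarrow> 'a \<Rightarrow> bool) \<Rightarrow> 'a set \<Rightarrow> bool" where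
  "coclique V E C \<longleftrightarrow> C \<subseteq> V \<and> (\<forall>x\<in>C. \<forall>y\<in>C. \<not> E x y)"

end

theory Submission
  imports Defs Complex_Main
begin

lemma sum_ind: "finite A \<Longrightarrow> (\<Sum>x\<in>A. if P x then 1 else 0 :: real) = real (card {x\<in>A. P x})"
  by (simp add: sum.If_cases Int_def conj_commute)

lemma dep_lemma:
  fixes f :: "'i \<Rightarrow> 'c \<Rightarrow> real"
  assumes "finite C" "finite I" "card C < card I"
  shows "\<exists>b. (\<exists>i\<in>I. b i \<noteq> 0) \<and> (\<forall>c\<in>C. (\<Sum>i\<in>I. b i * f i c) = 0)"
  using assms
proof (induction C arbitrary: I f rule: finite_induct)
  case empty
  then have "I \<noteq> {}" by auto
  then obtain i where "i \<in> I" by auto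
  then show ?case by (intro exI[of _ "\<lambda>_. 1"]) auto
next
  case (insert c0 C)
  show ?case
  proof (cases "\<forall>i\<in>I. f i c0 = 0")
    case True
    have "card C < card I" using insert by simp
    then obtain b where b: "\<exists>i\<in>I. b i \<noteq> 0" "\<forall>c\<in>C. (\<Sum>i\<in>I. b i * f i c) = 0"
      using insert.IH[OF insert.prems(1)] by blast
    show ?thesis using b True by (intro exI[of _ b]) auto
  next
    case False
    then obtain i0 where i0: "i0 \<in> I" "f i0 c0 \<noteq> 0" by auto
    define I' where "I' = I - {i0}"
    define f' where "f' i c = f i c - (f i c0 / f i0 c0) * f i0 c" for i c
    have fin': "finite I'" using insert.prems unfolding I'_def by auto
    have "card I' = card I - 1" unfolding I'_def using i0 insert.prems by simp
    then have "card C < card I'" using insert by simp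
    then obtain b' where b': "\<exists>i\<in>I'. b' i \<noteq> 0" "\<forall>c\<in>C. (\<Sum>i\<in>I'. b' i * f' i c) = 0"
      using insert.IH[OF fin'] by blast
    define K where "K = (\<Sum>j\<in>I'. b' j * f j c0)"
    define b where "b i = (if i = i0 then - K / f i0 c0 else b' i)" for i
    have split: "(\<Sum>i\<in>I. b i * f i c) = b i0 * f i0 c + (\<Sum>i\<in>I'. b' i * f i c)" for c
    proof -
      have "(\<Sum>i\<in>I. b i * f i c) = b i0 * f i0 c + (\<Sum>i\<in>I'. b i * f i c)"
        unfolding I'_def using i0 insert.prems(1) by (simp add: sum.remove)
      also have "(\<Sum>i\<in>I'. b i * f i c) = (\<Sum>i\<in>I'. b' i * f i c)"
        unfolding b_def I'_def by (intro sum.cong) auto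
      finally show ?thesis .
    qed
    have "\<forall>c\<in>insert c0 C. (\<Sum>i\<in>I. b i * f i c) = 0"
    proof
      fix c assume c: "c \<in> insert c0 C"
      show "(\<Sum>i\<in>I. b i * f i c) = 0"
      proof (cases "c = c0")
        case True
        then show ?thesis unfolding split using i0 unfolding b_def K_def by simp
      next
        case False
        then have cC: "c \<in> C" using c by auto
        have "(\<Sum>i\<in>I'. b' i * f i c) = (\<Sum>i\<in>I'. b' i * f' i c + (b' i * f i c0) * (f i0 c / f i0 c0))"
          unfolding f'_def by (intro sum.cong refl) (simp add: algebra_simps)
        also have "\<dots> = (\<Sum>i\<in>I'. b' i * f' i c) + K * (f i0 c / f i0 c0)"
          unfolding K_def by (simp only: sum.distrib sum_distrib_right)
        also have "\<dots> = K * (f i0 c / f i0 c0)" using b'(2) cC by simp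
        finally have "(\<Sum>i\<in>I. b i * f i c) = b i0 * f i0 c + K * (f i0 c / f i0 c0)" using split by simp
        then show ?thesis unfolding b_def using i0 by (simp add: field_simps)
      qed
    qed
    moreover have "\<exists>i\<in>I. b i \<noteq> 0" using b'(1) unfolding b_def I'_def by auto
    ultimately show ?thesis by blast
  qed
qed

lemma bessel_gen:
  fixes w :: "'i \<Rightarrow> 'c \<Rightarrow> real" and lam :: "'i \<Rightarrow> real" and u :: "'c \<Rightarrow> real"
  assumes finC: "finite C" and finI: "finite I"
    and proj: "\<And>i c. i \<in> I \<Longrightarrow> c \<in> C \<Longrightarrow> (\<Sum>j\<in>I. lam j * (\<Sum>d\<in>C. w i d * w j d) * w j c) = w i c"
  shows "(\<Sum>i\<in>I. lam i * ((\<Sum>c\<in>C. u c * w i c) * (\<Sum>c\<in>C. u c * w i c))) \<le> (\<Sum>c\<in>C. u c * u c)"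
proof -
  define ip where "ip i = (\<Sum>c\<in>C. u c * w i c)" for i
  define P where "P c = (\<Sum>i\<in>I. lam i * ip i * w i c)" for c
  define \<beta> where "\<beta> = (\<Sum>i\<in>I. lam i * (ip i * ip i))"
  have uP: "(\<Sum>c\<in>C. u c * P c) = \<beta>"
  proof -
    have "(\<Sum>c\<in>C. u c * P c) = (\<Sum>c\<in>C. \<Sum>i\<in>I. lam i * ip i * (u c * w i c))"
      unfolding P_def by (simp add: sum_distrib_left algebra_simps)
    also have "\<dots> = (\<Sum>i\<in>I. \<Sum>c\<in>C. lam i * ip i * (u c * w i c))" by (rule sum.swap)
    also have "\<dots> = (\<Sum>i\<in>I. lam i * ip i * (\<Sum>c\<in>C. u c * w i c))" by (simp add: sum_distrib_left)
    also have "\<dots> = \<beta>" unfolding \<beta>_def ip_def by (simp add: algebra_simps)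
    finally show ?thesis .
  qed
  have Pw: "(\<Sum>c\<in>C. P c * w i c) = ip i" if i: "i \<in> I" for i
  proof -
    have "(\<Sum>c\<in>C. P c * w i c) = (\<Sum>c\<in>C. \<Sum>j\<in>I. lam j * ip j * w j c * w i c)"
      unfolding P_def by (simp add: sum_distrib_right)
    also have "\<dots> = (\<Sum>j\<in>I. \<Sum>c\<in>C. lam j * ip j * w j c * w i c)" by (rule sum.swap)
    also have "\<dots> = (\<Sum>j\<in>I. lam j * (\<Sum>d\<in>C. w i d * w j d) * ip j)"
      by (intro sum.cong refl) (simp add: sum_distrib_left algebra_simps)
    also have "\<dots> = (\<Sum>j\<in>I. \<Sum>c\<in>C. lam j * (\<Sum>d\<in>C. w i d * w j d) * (u c * w j c))"
      unfolding ip_def by (simp add: sum_distrib_left)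
    also have "\<dots> = (\<Sum>c\<in>C. \<Sum>j\<in>I. lam j * (\<Sum>d\<in>C. w i d * w j d) * (u c * w j c))" by (rule sum.swap)
    also have "\<dots> = (\<Sum>c\<in>C. u c * (\<Sum>j\<in>I. lam j * (\<Sum>d\<in>C. w i d * w j d) * w j c))"
      by (intro sum.cong refl) (simp add: sum_distrib_left algebra_simps)
    also have "\<dots> = (\<Sum>c\<in>C. u c * w i c)" by (intro sum.cong refl) (simp add: proj i)
    finally show ?thesis unfolding ip_def .
  qed
  have PP: "(\<Sum>c\<in>C. P c * P c) = \<beta>"
  proof -
    have "(\<Sum>c\<in>C. P c * P c) = (\<Sum>c\<in>C. \<Sum>i\<in>I. lam i * ip i * (P c * w i c))"
      unfolding P_def[of c for c] by (simp add: sum_distrib_left algebra_simps)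
    also have "\<dots> = (\<Sum>i\<in>I. \<Sum>c\<in>C. lam i * ip i * (P c * w i c))" by (rule sum.swap)
    also have "\<dots> = (\<Sum>i\<in>I. lam i * ip i * (\<Sum>c\<in>C. P c * w i c))" by (simp add: sum_distrib_left)
    also have "\<dots> = \<beta>" unfolding \<beta>_def by (intro sum.cong refl) (simp add: Pw)
    finally show ?thesis .
  qed
  have "0 \<le> (\<Sum>c\<in>C. (u c - P c) * (u c - P c))" by (intro sum_nonneg) simp
  also have "\<dots> = (\<Sum>c\<in>C. u c * u c) - 2 * (\<Sum>c\<in>C. u c * P c) + (\<Sum>c\<in>C. P c * P c)"
    by (simp add: algebra_simps sum.distrib sum_subtractf sum_distrib_left)
  finally show ?thesis using uP PP unfolding \<beta>_def ip_def by simp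
qed

locale srgC =
  fixes V :: "'a set" and E :: "'a \<Rightarrow> 'a \<Rightarrow> bool" and C :: "'a set"
  assumes srg: "strongly_regular V E 76 30 8 14"
    and cc: "coclique V E C" and cardC: "card C = 16"
begin

lemma finV: "finite V" using srg unfolding strongly_regular_def simple_graph_def by auto
lemma symE: "E x y \<Longrightarrow> E y x" using srg unfolding strongly_regular_def simple_graph_def by auto
lemma irr: "\<not> E x x" using srg unfolding strongly_regular_def simple_graph_def by auto
lemma inV1: "E x y \<Longrightarrow> x \<in> V" using srg unfolding strongly_regular_def simple_graph_def by auto
lemma inV2: "E x y \<Longrightarrow> y \<in> V" using srg unfolding strongly_regular_def simple_graph_def by auto
lemma cardV: "card V = 76" using srg unfolding strongly_regular_def by auto
lemma deg: "x \<in> V \<Longrightarrow> card (nbhd V E x) = 30" using srg unfolding strongly_regular_def by auto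
lemma lam: "x \<in> V \<Longrightarrow> y \<in> V \<Longrightarrow> E x y \<Longrightarrow> card (nbhd V E x \<inter> nbhd V E y) = 8"
  using srg unfolding strongly_regular_def by auto
lemma mu: "x \<in> V \<Longrightarrow> y \<in> V \<Longrightarrow> x \<noteq> y \<Longrightarrow> \<not> E x y \<Longrightarrow> card (nbhd V E x \<inter> nbhd V E y) = 14"
  using srg unfolding strongly_regular_def by auto
lemma CV: "C \<subseteq> V" using cc unfolding coclique_def by auto
lemma Cind: "x \<in> C \<Longrightarrow> y \<in> C \<Longrightarrow> \<not> E x y" using cc unfolding coclique_def by auto
lemma finC: "finite C" using CV finV finite_subset by blast

definition a :: "'a \<Rightarrow> 'a \<Rightarrow> real" where "a x y = (if E x y then 1 else 0)"

lemma a_sym: "a x y = a y x" unfolding a_def using symE by auto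
lemma a_C: "x \<in> C \<Longrightarrow> y \<in> C \<Longrightarrow> a x y = 0" unfolding a_def using Cind by auto
lemma a_sq: "a x y * a x y = a x y" unfolding a_def by auto
lemma a_01: "a x y = 0 \<or> a x y = 1" unfolding a_def by auto
lemma a_nn: "0 \<le> a x y" unfolding a_def by auto
lemma a_diag: "a x x = 0" unfolding a_def using irr by auto

lemma deg_sum: "x \<in> V \<Longrightarrow> (\<Sum>y\<in>V. a x y) = 30"
proof -
  assume x: "x \<in> V"
  have "(\<Sum>y\<in>V. a x y) = real (card {y\<in>V. E x y})" unfolding a_def by (rule sum_ind[OF finV])
  also have "{y\<in>V. E x y} = nbhd V E x" unfolding nbhd_def by auto
  finally show ?thesis using deg[OF x] by simp
qed

lemma cn_sum: "x \<in> V \<Longrightarrow> y \<in> V \<Longrightarrow> (\<Sum>z\<in>V. a x z * a z y) = (if x = y then 30 else if E x y then 8 else 14)"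
proof -
  assume x: "x \<in> V" and y: "y \<in> V"
  have "(\<Sum>z\<in>V. a x z * a z y) = (\<Sum>z\<in>V. if E x z \<and> E y z then 1 else 0)"
    unfolding a_def using symE by (intro sum.cong) auto
  also have "\<dots> = real (card {z\<in>V. E x z \<and> E y z})" by (rule sum_ind[OF finV])
  also have "{z\<in>V. E x z \<and> E y z} = nbhd V E x \<inter> nbhd V E y" unfolding nbhd_def by auto
  finally show ?thesis using deg[OF x] lam[OF x y] mu[OF x y] by auto
qed

definition D where "D = V - C"
lemma finD: "finite D" unfolding D_def using finV by auto
lemma cardD: "card D = 60" unfolding D_def using cardV cardC CV finV by (simp add: card_Diff_subset finite_subset)
lemma DV: "D \<subseteq> V" unfolding D_def by auto
lemma sumD: "(\<Sum>x\<in>D. f x) = (\<Sum>x\<in>V. f x) - (\<Sum>x\<in>C. (f x::real))"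
  unfolding D_def by (rule sum_diff[OF finV CV])

lemma sum_cn_C: "c \<in> C \<Longrightarrow> c' \<in> C \<Longrightarrow> (\<Sum>x\<in>D. a c x * a x c') = (if c = c' then 30 else 14)"
proof -
  assume c: "c \<in> C" and c': "c' \<in> C"
  have "(\<Sum>x\<in>C. a c x * a x c') = 0" using c by (simp add: a_C)
  then show ?thesis unfolding sumD using cn_sum[of c c'] c c' subsetD[OF CV c] subsetD[OF CV c'] Cind by auto
qed

definition s where "s x = (\<Sum>c\<in>C. a x c)"

lemma sum_s: "(\<Sum>x\<in>D. s x) = 480"
proof -
  have "(\<Sum>x\<in>D. s x) = (\<Sum>c\<in>C. \<Sum>x\<in>D. a c x)" unfolding s_def
    by (subst sum.swap) (simp add: a_sym)
  also have "\<dots> = (\<Sum>c\<in>C. 30)"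
  proof (rule sum.cong)
    fix c assume c: "c \<in> C"
    have "(\<Sum>x\<in>C. a c x) = 0" using c by (simp add: a_C)
    then show "(\<Sum>x\<in>D. a c x) = 30" unfolding sumD using deg_sum[of c] subsetD[OF CV c] by auto
  qed simp
  finally show ?thesis using cardC by simp
qed

lemma sum_s2: "(\<Sum>x\<in>D. s x * s x) = 3840"
proof -
  have "(\<Sum>x\<in>D. s x * s x) = (\<Sum>x\<in>D. \<Sum>c\<in>C. \<Sum>c'\<in>C. a c x * a x c')"
    unfolding s_def by (simp add: sum_product a_sym mult.commute)
  also have "\<dots> = (\<Sum>c\<in>C. \<Sum>c'\<in>C. \<Sum>x\<in>D. a c x * a x c')"
    by (subst sum.swap) (subst (2) sum.swap, simp)
  also have "\<dots> = (\<Sum>c\<in>C. \<Sum>c'\<in>C. if c = c' then 30 else 14)"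
    by (intro sum.cong refl) (simp add: sum_cn_C)
  also have "\<dots> = (\<Sum>c\<in>C. 240)"
  proof (rule sum.cong)
    fix c assume c: "c \<in> C"
    have "(\<Sum>c'\<in>C. if c = c' then 30 else 14 :: real) = (\<Sum>c'\<in>C. 14 + (if c = c' then 16 else 0))"
      by (intro sum.cong) auto
    also have "\<dots> = 14 * 16 + 16" using cardC finC c by (simp add: sum.distrib)
    finally show "(\<Sum>c'\<in>C. if c = c' then 30 else 14 :: real) = 240" by simp
  qed simp
  finally show ?thesis using cardC by simp
qed

lemma s8: "x \<in> D \<Longrightarrow> s x = 8"
proof -
  have "(\<Sum>x\<in>D. (s x - 8) * (s x - 8)) = (\<Sum>x\<in>D. s x * s x) - 16 * (\<Sum>x\<in>D. s x) + (\<Sum>x\<in>D. 64)"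
    by (simp add: algebra_simps sum.distrib sum_subtractf sum_distrib_left)
  also have "\<dots> = 0" using sum_s sum_s2 cardD by simp
  finally have "(\<Sum>x\<in>D. (s x - 8) * (s x - 8)) = 0" .
  then have "\<forall>x\<in>D. (s x - 8) * (s x - 8) = 0" using finD by (subst (asm) sum_nonneg_eq_0_iff) auto
  then show "x \<in> D \<Longrightarrow> s x = 8" by auto
qed

definition Q :: "('a \<Rightarrow> real) \<Rightarrow> ('a \<Rightarrow> real) \<Rightarrow> real" where
  "Q f h = (\<Sum>w\<in>V. \<Sum>u\<in>V. f w * a w u * h u)"
definition I2 :: "('a \<Rightarrow> real) \<Rightarrow> ('a \<Rightarrow> real) \<Rightarrow> real" where
  "I2 f h = (\<Sum>w\<in>V. f w * h w)"
definition S1 :: "('a \<Rightarrow> real) \<Rightarrow> real" where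
  "S1 f = (\<Sum>w\<in>V. f w)"

lemma delta_sum: "u \<in> V \<Longrightarrow> (\<Sum>u'\<in>V. g u' * (if u = u' then 1 else 0 :: real)) = g u"
proof -
  assume u: "u \<in> V"
  have "(\<Sum>u'\<in>V. g u' * (if u = u' then 1 else 0 :: real)) = (\<Sum>u'\<in>V. if u = u' then g u' else 0)"
    by (intro sum.cong) auto
  also have "\<dots> = g u" using finV u by (simp add: sum.delta)
  finally show ?thesis .
qed

lemma cnform: "u \<in> V \<Longrightarrow> u' \<in> V \<Longrightarrow> (\<Sum>w\<in>V. a u w * a w u') = 16 * (if u = u' then 1 else 0) + 14 - 6 * a u u'"
  using cn_sum[of u u'] by (auto simp: a_def irr)

lemma psd: "10 * Q f f \<le> 20 * I2 f f + 14 * S1 f * S1 f"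
proof -
  define Af where "Af w = (\<Sum>u\<in>V. a w u * f u)" for w
  have "0 \<le> (\<Sum>w\<in>V. (2 * f w - Af w) * (2 * f w - Af w))" by (intro sum_nonneg) auto
  also have "\<dots> = 4 * I2 f f - 4 * Q f f + (\<Sum>w\<in>V. Af w * Af w)"
    unfolding I2_def Q_def Af_def
    by (simp add: algebra_simps sum.distrib sum_subtractf sum_distrib_left)
  also have "(\<Sum>w\<in>V. Af w * Af w) = (\<Sum>w\<in>V. \<Sum>u\<in>V. \<Sum>u'\<in>V. f u * f u' * (a u w * a w u'))"
    unfolding Af_def by (simp add: sum_product a_sym algebra_simps)
  also have "\<dots> = (\<Sum>u\<in>V. \<Sum>u'\<in>V. \<Sum>w\<in>V. f u * f u' * (a u w * a w u'))"
    by (subst sum.swap) (subst (2) sum.swap, simp)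
  also have "\<dots> = (\<Sum>u\<in>V. \<Sum>u'\<in>V. f u * f u' * (16 * (if u = u' then 1 else 0) + 14 - 6 * a u u'))"
    by (intro sum.cong refl) (simp add: sum_distrib_left[symmetric] cnform)
  also have "\<dots> = (\<Sum>u\<in>V. \<Sum>u'\<in>V. 16 * (f u * f u' * (if u = u' then 1 else 0)) + 14 * (f u * f u') - 6 * (f u * a u u' * f u'))"
    by (intro sum.cong refl) (simp add: algebra_simps)
  also have "\<dots> = 16 * I2 f f + 14 * S1 f * S1 f - 6 * Q f f"
  proof -
    have 1: "(\<Sum>u\<in>V. \<Sum>u'\<in>V. 16 * (f u * f u' * (if u = u' then 1 else 0)) + 14 * (f u * f u') - 6 * (f u * a u u' * f u'))
      = 16 * (\<Sum>u\<in>V. \<Sum>u'\<in>V. f u * f u' * (if u = u' then 1 else 0)) + 14 * (\<Sum>u\<in>V. \<Sum>u'\<in>V. f u * f u') - 6 * (\<Sum>u\<in>V. \<Sum>u'\<in>V. f u * a u u' * f u')"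
      by (simp add: sum.distrib sum_subtractf sum_distrib_left)
    have 2: "(\<Sum>u\<in>V. \<Sum>u'\<in>V. f u * f u' * (if u = u' then 1 else 0)) = (\<Sum>u\<in>V. f u * f u)"
      by (intro sum.cong refl) (simp add: delta_sum[where g="\<lambda>u'. f _ * f u'"])
    have 3: "(\<Sum>u\<in>V. \<Sum>u'\<in>V. f u * f u') = (\<Sum>u\<in>V. f u) * (\<Sum>u\<in>V. f u)"
      by (simp add: sum_product)
    show ?thesis unfolding 1 2 3 I2_def S1_def Q_def by simp
  qed
  finally show ?thesis by simp
qed

lemma Q_add1: "Q (\<lambda>w. f1 w + f2 w) h = Q f1 h + Q f2 h"
  unfolding Q_def by (simp add: algebra_simps sum.distrib)
lemma Q_add2: "Q h (\<lambda>w. f1 w + f2 w) = Q h f1 + Q h f2"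
  unfolding Q_def by (simp add: algebra_simps sum.distrib)
lemma Q_sc1: "Q (\<lambda>w. c * f w) h = c * Q f h"
  unfolding Q_def by (simp add: algebra_simps sum_distrib_left)
lemma Q_sc2: "Q h (\<lambda>w. c * f w) = c * Q h f"
  unfolding Q_def by (simp add: algebra_simps sum_distrib_left)
lemma I2_add1: "I2 (\<lambda>w. f1 w + f2 w) h = I2 f1 h + I2 f2 h"
  unfolding I2_def by (simp add: algebra_simps sum.distrib)
lemma I2_add2: "I2 h (\<lambda>w. f1 w + f2 w) = I2 h f1 + I2 h f2"
  unfolding I2_def by (simp add: algebra_simps sum.distrib)
lemma I2_sc1: "I2 (\<lambda>w. c * f w) h = c * I2 f h"
  unfolding I2_def by (simp add: algebra_simps sum_distrib_left)
lemma I2_sc2: "I2 h (\<lambda>w. c * f w) = c * I2 h f"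
  unfolding I2_def by (simp add: algebra_simps sum_distrib_left)
lemma S1_add: "S1 (\<lambda>w. f1 w + f2 w) = S1 f1 + S1 f2"
  unfolding S1_def by (simp add: sum.distrib)
lemma S1_sc: "S1 (\<lambda>w. c * f w) = c * S1 f"
  unfolding S1_def by (simp add: sum_distrib_left)
lemma Q_sym: "Q f h = Q h f"
  unfolding Q_def by (subst sum.swap) (simp add: a_sym algebra_simps)
lemma I2_sym: "I2 f h = I2 h f"
  unfolding I2_def by (simp add: algebra_simps)

definition dl :: "'a \<Rightarrow> 'a \<Rightarrow> real" where "dl x w = (if w = x then 1 else 0)"
definition hh :: "'a \<Rightarrow> 'a \<Rightarrow> real" where "hh x w = (if w \<in> C then 15 * a x w - 7 else 0)"
definition one :: "'a \<Rightarrow> real" where "one w = 1"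
definition g :: "'a \<Rightarrow> 'a \<Rightarrow> real" where "g x = (\<lambda>w. 30 * dl x w + hh x w + (-1/2) * one w)"
definition m :: "'a \<Rightarrow> 'a \<Rightarrow> real" where "m x y = (\<Sum>c\<in>C. a x c * a y c)"
definition q :: "'a \<Rightarrow> 'a \<Rightarrow> real" where "q x y = m x y + 2 * a x y"

lemma dl_sym: "dl x y = dl y x" unfolding dl_def by auto
lemma sumC: "(\<Sum>w\<in>V. if w \<in> C then F w else 0) = (\<Sum>w\<in>C. F w :: real)"
  using finV CV by (simp add: sum.If_cases Int_absorb1)
lemma sumdl: "x \<in> V \<Longrightarrow> (\<Sum>w\<in>V. dl x w * F w) = F x"
proof -
  assume x: "x \<in> V"
  have "(\<Sum>w\<in>V. dl x w * F w) = (\<Sum>w\<in>V. if w = x then F w else 0)" unfolding dl_def by (intro sum.cong) auto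
  also have "\<dots> = F x" using finV x by (simp add: sum.delta')
  finally show ?thesis .
qed
lemma sumdl': "x \<in> V \<Longrightarrow> (\<Sum>w\<in>V. F w * dl x w) = F x"
  using sumdl[of x F] by (simp add: mult.commute)

lemma m_sym: "m x y = m y x" unfolding m_def by (simp add: mult.commute)
lemma q_sym: "q x y = q y x" unfolding q_def using m_sym a_sym by simp
lemma m_diag: "x \<in> D \<Longrightarrow> m x x = 8" unfolding m_def using s8 unfolding s_def by (simp add: a_sq)

lemma D_notC: "x \<in> D \<Longrightarrow> x \<notin> C" unfolding D_def by auto
lemma D_V: "x \<in> D \<Longrightarrow> x \<in> V" unfolding D_def by auto

lemma S1_dl: "x \<in> V \<Longrightarrow> S1 (dl x) = 1" unfolding S1_def using sumdl[of x "\<lambda>_. 1"] by simp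
lemma S1_hh: "x \<in> D \<Longrightarrow> S1 (hh x) = 8"
proof -
  assume x: "x \<in> D"
  have "S1 (hh x) = (\<Sum>c\<in>C. 15 * a x c - 7)" unfolding S1_def hh_def by (rule sumC)
  also have "\<dots> = 15 * s x - 7 * 16" unfolding s_def using cardC by (simp add: sum_subtractf sum_distrib_left)
  finally show ?thesis using s8[OF x] by simp
qed
lemma S1_one: "S1 one = 76" unfolding S1_def one_def using cardV by simp
lemma S1_g: "x \<in> D \<Longrightarrow> S1 (g x) = 0"
  unfolding g_def by (simp only: S1_add S1_sc) (simp add: S1_dl S1_hh S1_one D_V)

lemma I2_dl_dl: "x \<in> V \<Longrightarrow> I2 (dl x) (dl y) = dl y x" unfolding I2_def by (rule sumdl)
lemma I2_dl: "x \<in> V \<Longrightarrow> I2 (dl x) f = f x" unfolding I2_def by (rule sumdl)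
lemma I2_dl': "x \<in> V \<Longrightarrow> I2 f (dl x) = f x" unfolding I2_def by (rule sumdl')
lemma I2_one: "I2 f one = S1 f" unfolding I2_def S1_def one_def by simp
lemma I2_one': "I2 one f = S1 f" unfolding I2_def S1_def one_def by simp
lemma hh_D: "y \<in> D \<Longrightarrow> hh x y = 0" unfolding hh_def D_def by auto
lemma I2_hh: "x \<in> D \<Longrightarrow> y \<in> D \<Longrightarrow> I2 (hh x) (hh y) = 225 * m x y - 896"
proof -
  assume x: "x \<in> D" and y: "y \<in> D"
  have "I2 (hh x) (hh y) = (\<Sum>c\<in>C. (15 * a x c - 7) * (15 * a y c - 7))"
    unfolding I2_def hh_def by (subst sumC[symmetric]) (intro sum.cong, auto)
  also have "\<dots> = (\<Sum>c\<in>C. 225 * (a x c * a y c) - 105 * a x c - 105 * a y c + 49)"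
    by (intro sum.cong) (auto simp: algebra_simps)
  also have "\<dots> = 225 * m x y - 105 * s x - 105 * s y + 49 * 16"
    unfolding m_def s_def using cardC by (simp add: sum.distrib sum_subtractf sum_distrib_left)
  finally show ?thesis using s8[OF x] s8[OF y] by simp
qed

lemma Q_dl: "x \<in> V \<Longrightarrow> Q (dl x) f = (\<Sum>u\<in>V. a x u * f u)"
proof -
  assume x: "x \<in> V"
  have "Q (dl x) f = (\<Sum>w\<in>V. dl x w * (\<Sum>u\<in>V. a w u * f u))"
    unfolding Q_def by (simp add: sum_distrib_left mult.assoc)
  also have "\<dots> = (\<Sum>u\<in>V. a x u * f u)" by (rule sumdl[OF x])
  finally show ?thesis .
qed
lemma Q_dl_dl: "x \<in> V \<Longrightarrow> y \<in> V \<Longrightarrow> Q (dl x) (dl y) = a x y"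
  by (simp add: Q_dl sumdl')
lemma Q_one: "Q f one = 30 * S1 f"
proof -
  have "Q f one = (\<Sum>w\<in>V. f w * (\<Sum>u\<in>V. a w u))" unfolding Q_def one_def by (simp add: sum_distrib_left)
  also have "\<dots> = (\<Sum>w\<in>V. f w * 30)" by (intro sum.cong refl) (simp add: deg_sum)
  finally show ?thesis unfolding S1_def by (simp add: sum_distrib_right mult.commute)
qed
lemma Q_one': "Q one f = 30 * S1 f" using Q_one Q_sym by metis
lemma Q_hh_hh: "Q (hh x) (hh y) = 0"
proof -
  have h: "\<And>w u. hh x w * a w u * hh y u = 0" unfolding hh_def using a_C by auto
  show ?thesis unfolding Q_def by (simp add: h)
qed
lemma Q_dl_hh: "x \<in> D \<Longrightarrow> y \<in> D \<Longrightarrow> Q (dl x) (hh y) = 15 * m x y - 56"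
proof -
  assume x: "x \<in> D" and y: "y \<in> D"
  have "Q (dl x) (hh y) = (\<Sum>u\<in>V. if u \<in> C then a x u * (15 * a y u - 7) else 0)"
    unfolding Q_dl[OF D_V[OF x]] hh_def by (intro sum.cong) auto
  also have "\<dots> = (\<Sum>c\<in>C. 15 * (a x c * a y c) - 7 * a x c)" unfolding sumC by (intro sum.cong) (auto simp: algebra_simps)
  also have "\<dots> = 15 * m x y - 7 * s x" unfolding m_def s_def by (simp add: sum_subtractf sum_distrib_left)
  finally show ?thesis using s8[OF x] by simp
qed

lemma Gval: "x \<in> D \<Longrightarrow> y \<in> D \<Longrightarrow> 2 * I2 (g x) (g y) - Q (g x) (g y) = (if x = y then 300 else 150 * (14 - 3 * q x y))"
proof -
  assume x: "x \<in> D" and y: "y \<in> D"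
  note xv = D_V[OF x] and yv = D_V[OF y]
  have I: "I2 (g x) (g y) = 900 * dl y x + 225 * m x y - 915"
    unfolding g_def
    by (simp only: I2_add1 I2_add2 I2_sc1 I2_sc2)
       (simp add: I2_dl_dl I2_dl I2_dl' I2_one I2_one' I2_hh x y xv yv
        hh_D S1_dl S1_hh S1_one dl_sym[of x y] algebra_simps)
  have Qv: "Q (g x) (g y) = 900 * a x y + 900 * m x y - 3930"
    unfolding g_def
    by (simp only: Q_add1 Q_add2 Q_sc1 Q_sc2 S1_add S1_sc)
       (simp add: Q_dl_dl Q_one Q_one' Q_hh_hh Q_dl_hh x y xv yv
        Q_sym[of "hh x" "dl y"] m_sym[of y x] S1_dl S1_hh S1_one S1_add S1_sc algebra_simps)
  show ?thesis
  proof (cases "x = y")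
    case True
    then show ?thesis using I Qv m_diag[OF x] a_diag[of x] unfolding dl_def by simp
  next
    case False
    then show ?thesis using I Qv unfolding dl_def q_def by (simp add: algebra_simps)
  qed
qed

definition Gf where "Gf x y = 2 * I2 (g x) (g y) - Q (g x) (g y)"

lemma Bcomb:
  assumes x: "x \<in> D" and y: "y \<in> D" and z: "z \<in> D"
  shows "0 \<le> c1*c1*Gf x x + c2*c2*Gf y y + c3*c3*Gf z z + 2*c1*c2*Gf x y + 2*c1*c3*Gf x z + 2*c2*c3*Gf y z"
proof -
  define F where "F = (\<lambda>w. c1 * g x w + c2 * g y w + c3 * g z w)"
  have S: "S1 F = 0" unfolding F_def by (simp only: S1_add S1_sc) (simp add: S1_g x y z)
  have "10 * Q F F \<le> 20 * I2 F F + 14 * S1 F * S1 F" by (rule psd)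
  then have "0 \<le> 2 * I2 F F - Q F F" using S by simp
  also have "2 * I2 F F - Q F F = c1*c1*Gf x x + c2*c2*Gf y y + c3*c3*Gf z z + 2*c1*c2*Gf x y + 2*c1*c3*Gf x z + 2*c2*c3*Gf y z"
    unfolding F_def Gf_def
    by (simp only: I2_add1 I2_add2 I2_sc1 I2_sc2 Q_add1 Q_add2 Q_sc1 Q_sc2)
       (simp add: I2_sym[of "g y" "g x"] I2_sym[of "g z" "g x"] I2_sym[of "g z" "g y"]
         Q_sym[of "g y" "g x"] Q_sym[of "g z" "g x"] Q_sym[of "g z" "g y"] algebra_simps)
  finally show ?thesis .
qed

lemma Gf_val: "x \<in> D \<Longrightarrow> y \<in> D \<Longrightarrow> Gf x y = (if x = y then 300 else 150 * (14 - 3 * q x y))"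
  unfolding Gf_def by (rule Gval)

lemma q_range: assumes x: "x \<in> D" and y: "y \<in> D" and xy: "x \<noteq> y"
  shows "q x y = 4 \<or> q x y = 5"
proof -
  have 1: "0 \<le> 300 + 300 + 2 * (150 * (14 - 3 * q x y))"
    using Bcomb[OF x y x, of 1 1 0] by (simp add: Gf_val x y xy)
  have 2: "0 \<le> 300 + 300 - 2 * (150 * (14 - 3 * q x y))"
    using Bcomb[OF x y x, of 1 "-1" 0] by (simp add: Gf_val x y xy)
  have mc: "m x y = real (card {c\<in>C. E x c \<and> E y c})"
    unfolding m_def a_def by (simp add: sum_ind[OF finC, symmetric] if_distrib cong: if_cong) (intro sum.cong, auto)
  have "q x y = real (card {c\<in>C. E x c \<and> E y c}) + 2 * a x y" unfolding q_def mc by simp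
  then obtain n :: nat where qn: "q x y = real n + 2 * a x y" by blast
  have "12 \<le> 3 * q x y" using 2 by (simp add: algebra_simps)
  moreover have "3 * q x y \<le> 16" using 1 by (simp add: algebra_simps)
  ultimately show ?thesis using qn a_01[of x y] by (cases "a x y = 0") auto
qed

lemma q_trans: assumes x: "x \<in> D" and y: "y \<in> D" and z: "z \<in> D"
  and xy: "x \<noteq> y" and xz: "x \<noteq> z" and yz: "y \<noteq> z" and q4: "q x y = 4"
  shows "q x z = q y z"
proof -
  define t where "t = q x z - q y z"
  have "0 \<le> 300 + 300 + t*t*300 - 2 * (150 * (14 - 3 * q x y)) + 2*t*(150 * (14 - 3 * q x z)) - 2*t*(150 * (14 - 3 * q y z))"
    using Bcomb[OF x y z, of 1 "-1" t] by (simp add: Gf_val x y z xy xz yz)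
  then have "0 \<le> - 600 * (t * t)" unfolding t_def using q4 by (simp add: algebra_simps)
  then have "t * t \<le> 0" by simp
  then have "t = 0" by (metis mult_eq_0_iff not_square_less_zero order_antisym_conv zero_le_square)
  then show ?thesis unfolding t_def by simp
qed

lemma sumD_a: "c \<in> C \<Longrightarrow> (\<Sum>y\<in>D. a y c) = 30"
proof -
  assume c: "c \<in> C"
  have "(\<Sum>x\<in>C. a x c) = 0" using c by (simp add: a_C)
  then show ?thesis unfolding sumD using deg_sum[of c] subsetD[OF CV c] by (simp add: a_sym)
qed

lemma degD: "x \<in> D \<Longrightarrow> (\<Sum>y\<in>D. a x y) = 22"
proof -
  assume x: "x \<in> D"
  show ?thesis unfolding sumD using deg_sum[OF D_V[OF x]] s8[OF x] unfolding s_def by simp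
qed

lemma sum_m: "x \<in> D \<Longrightarrow> (\<Sum>y\<in>D. m x y) = 240"
proof -
  assume x: "x \<in> D"
  have "(\<Sum>y\<in>D. m x y) = (\<Sum>c\<in>C. a x c * (\<Sum>y\<in>D. a y c))"
    unfolding m_def by (subst sum.swap) (simp add: sum_distrib_left)
  also have "\<dots> = (\<Sum>c\<in>C. a x c * 30)" by (intro sum.cong refl) (simp add: sumD_a)
  finally show ?thesis using s8[OF x] unfolding s_def by (simp add: sum_distrib_right[symmetric])
qed

lemma sum_am: "x \<in> D \<Longrightarrow> (\<Sum>y\<in>D. a x y * m x y) = 64"
proof -
  assume x: "x \<in> D"
  have "(\<Sum>y\<in>D. a x y * m x y) = (\<Sum>c\<in>C. a x c * (\<Sum>y\<in>D. a x y * a y c))"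
    unfolding m_def sum_distrib_left by (subst sum.swap) (simp add: mult.left_commute)
  also have "\<dots> = (\<Sum>c\<in>C. a x c * 8)"
  proof (intro sum.cong refl)
    fix c assume c: "c \<in> C"
    have "(\<Sum>y\<in>C. a x y * a y c) = 0" using c by (simp add: a_C)
    then have e: "(\<Sum>y\<in>D. a x y * a y c) = (if x = c then 30 else if E x c then 8 else 14)"
      unfolding sumD using cn_sum[OF D_V[OF x] subsetD[OF CV c]] by simp
    show "a x c * (\<Sum>y\<in>D. a x y * a y c) = a x c * 8"
      unfolding e using D_notC[OF x] c by (auto simp: a_def)
  qed
  finally show ?thesis using s8[OF x] unfolding s_def by (simp add: sum_distrib_right[symmetric])
qed

lemma m_adj: "x \<in> D \<Longrightarrow> y \<in> D \<Longrightarrow> E x y \<Longrightarrow> m x y = 2 \<or> m x y = 3"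
  using q_range[of x y] irr unfolding q_def a_def by auto
lemma m_non: "x \<in> D \<Longrightarrow> y \<in> D \<Longrightarrow> x \<noteq> y \<Longrightarrow> \<not> E x y \<Longrightarrow> m x y = 4 \<or> m x y = 5"
  using q_range[of x y] unfolding q_def a_def by auto

lemma cnt_adj: assumes x: "x \<in> D" shows "card {y\<in>D. E x y \<and> m x y = 2} = 2"
proof -
  have "(\<Sum>y\<in>D. a x y * (3 - m x y)) = (\<Sum>y\<in>D. if E x y \<and> m x y = 2 then 1 else 0)"
  proof (intro sum.cong refl)
    fix y assume y: "y \<in> D"
    show "a x y * (3 - m x y) = (if E x y \<and> m x y = 2 then 1 else 0)"
      using m_adj[OF x y] unfolding a_def by auto
  qed
  also have "\<dots> = real (card {y\<in>D. E x y \<and> m x y = 2})" by (rule sum_ind[OF finD])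
  finally have "real (card {y\<in>D. E x y \<and> m x y = 2}) = (\<Sum>y\<in>D. a x y * (3 - m x y))" by simp
  also have "\<dots> = 3 * (\<Sum>y\<in>D. a x y) - (\<Sum>y\<in>D. a x y * m x y)"
    by (simp add: algebra_simps sum_subtractf sum_distrib_left)
  finally show ?thesis using degD[OF x] sum_am[OF x] by simp
qed

lemma cnt_non: assumes x: "x \<in> D" shows "card {y\<in>D. y \<noteq> x \<and> \<not> E x y \<and> m x y = 4} = 17"
proof -
  define b where "b y = 1 - a x y - dl x y" for y
  have "(\<Sum>y\<in>D. b y * (5 - m x y)) = (\<Sum>y\<in>D. if y \<noteq> x \<and> \<not> E x y \<and> m x y = 4 then 1 else 0)"
  proof (intro sum.cong refl)
    fix y assume y: "y \<in> D"
    show "b y * (5 - m x y) = (if y \<noteq> x \<and> \<not> E x y \<and> m x y = 4 then 1 else 0)"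
      using m_non[OF x y] irr[of x] unfolding b_def a_def dl_def by auto
  qed
  also have "\<dots> = real (card {y\<in>D. y \<noteq> x \<and> \<not> E x y \<and> m x y = 4})" by (rule sum_ind[OF finD])
  finally have "real (card {y\<in>D. y \<noteq> x \<and> \<not> E x y \<and> m x y = 4}) = (\<Sum>y\<in>D. b y * (5 - m x y))" by simp
  also have "\<dots> = 5 * (\<Sum>y\<in>D. 1) - 5 * (\<Sum>y\<in>D. a x y) - 5 * (\<Sum>y\<in>D. dl x y)
      - (\<Sum>y\<in>D. m x y) + (\<Sum>y\<in>D. a x y * m x y) + (\<Sum>y\<in>D. dl x y * m x y)"
    unfolding b_def by (simp add: algebra_simps sum_subtractf sum.distrib sum_distrib_left)
  also have "(\<Sum>y\<in>D. dl x y) = 1" using finD x unfolding dl_def by (simp add: sum.delta')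
  also have "(\<Sum>y\<in>D. dl x y * m x y) = 8"
  proof -
    have "(\<Sum>y\<in>D. dl x y * m x y) = (\<Sum>y\<in>D. if y = x then m x y else 0)" unfolding dl_def by (intro sum.cong) auto
    also have "\<dots> = m x x" using finD x by (simp add: sum.delta')
    finally show ?thesis using m_diag[OF x] by simp
  qed
  finally show ?thesis using degD[OF x] sum_am[OF x] sum_m[OF x] cardD by simp
qed

definition x0 where "x0 = (SOME x. x \<in> D)"
lemma x0D: "x0 \<in> D"
proof -
  have "D \<noteq> {}" using cardD by auto
  then show ?thesis unfolding x0_def by (auto intro: someI)
qed

definition D1 where "D1 = {y\<in>D. y = x0 \<or> q x0 y = 4}"
lemma D1D: "D1 \<subseteq> D" unfolding D1_def by auto
lemma x0D1: "x0 \<in> D1" unfolding D1_def using x0D by auto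

lemma D1_q: assumes x: "x \<in> D1" and y: "y \<in> D1" and xy: "x \<noteq> y" shows "q x y = 4"
proof -
  have xD: "x \<in> D" and yD: "y \<in> D" using x y D1D by auto
  show ?thesis
  proof (cases "x = x0")
    case True then show ?thesis using y xy unfolding D1_def by auto
  next
    case xn: False
    show ?thesis
    proof (cases "y = x0")
      case True then show ?thesis using x xy q_sym[of x0 x] unfolding D1_def by auto
    next
      case yn: False
      have "q x0 x = 4" "q x0 y = 4" using x y xn yn unfolding D1_def by auto
      then show ?thesis using q_trans[OF x0D xD yD] xn yn xy by auto
    qed
  qed
qed

lemma D1_char: assumes x: "x \<in> D1" shows "D1 = insert x {y\<in>D. y \<noteq> x \<and> q x y = 4}"
proof
  show "D1 \<subseteq> insert x {y\<in>D. y \<noteq> x \<and> q x y = 4}" using D1_q[OF x] D1D by auto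
next
  have xD: "x \<in> D" using x D1D by auto
  show "insert x {y\<in>D. y \<noteq> x \<and> q x y = 4} \<subseteq> D1"
  proof
    fix y assume "y \<in> insert x {y\<in>D. y \<noteq> x \<and> q x y = 4}"
    then consider "y = x" | "y \<in> D" "y \<noteq> x" "q x y = 4" by auto
    then show "y \<in> D1"
    proof cases
      case 1 then show ?thesis using x by simp
    next
      case 2
      show ?thesis
      proof (cases "y = x0 \<or> x = x0")
        case True then show ?thesis using 2 unfolding D1_def by auto
      next
        case False
        have "q x x0 = 4" using D1_q[OF x x0D1] False by auto
        then have "q x y = q x0 y" using q_trans[OF xD x0D 2(1)] False 2 by auto
        then show ?thesis using 2 unfolding D1_def by auto
      qed
    qed
  qed
qed

lemma split4: assumes x: "x \<in> D"
  shows "{y\<in>D. y \<noteq> x \<and> q x y = 4} = {y\<in>D. E x y \<and> m x y = 2} \<union> {y\<in>D. y \<noteq> x \<and> \<not> E x y \<and> m x y = 4}"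
  unfolding q_def a_def using irr by auto

lemma card_D1: "card D1 = 20"
proof -
  have "card {y\<in>D. y \<noteq> x0 \<and> q x0 y = 4} = 19"
    unfolding split4[OF x0D] using cnt_adj[OF x0D] cnt_non[OF x0D] finD
    by (subst card_Un_disjoint) auto
  then show ?thesis using D1_char[OF x0D1] finD by simp
qed

definition nb1 where "nb1 x = {y\<in>D1. E x y}"
lemma card_nb1: assumes x: "x \<in> D1" shows "card (nb1 x) = 2"
proof -
  have xD: "x \<in> D" using x D1D by auto
  have "nb1 x = {y\<in>D. E x y \<and> m x y = 2}"
  proof -
    have "nb1 x = {y \<in> insert x {y\<in>D. y \<noteq> x \<and> q x y = 4}. E x y}"
      unfolding nb1_def using D1_char[OF x] by simp
    also have "\<dots> = {y\<in>D. E x y \<and> m x y = 2}" unfolding q_def a_def using irr by auto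
    finally show ?thesis .
  qed
  then show ?thesis using cnt_adj[OF xD] by simp
qed

lemma D1_m: "x \<in> D1 \<Longrightarrow> y \<in> D1 \<Longrightarrow> x \<noteq> y \<Longrightarrow> m x y = (if E x y then 2 else 4)"
  using D1_q[of x y] unfolding q_def a_def by auto

definition v where "v x c = 2 * a x c - 1"
definition vd where "vd x y = (\<Sum>c\<in>C. v x c * v y c)"

lemma vd_m: "x \<in> D \<Longrightarrow> y \<in> D \<Longrightarrow> vd x y = 4 * m x y - 16"
proof -
  assume x: "x \<in> D" and y: "y \<in> D"
  have "vd x y = (\<Sum>c\<in>C. 4 * (a x c * a y c) - 2 * a x c - 2 * a y c + 1)"
    unfolding vd_def v_def by (intro sum.cong) (auto simp: algebra_simps)
  also have "\<dots> = 4 * m x y - 2 * s x - 2 * s y + 16" unfolding m_def s_def using cardC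
    by (simp add: sum.distrib sum_subtractf sum_distrib_left)
  finally show ?thesis using s8[OF x] s8[OF y] by simp
qed

lemma vd_D1: "x \<in> D1 \<Longrightarrow> y \<in> D1 \<Longrightarrow> vd x y = (if x = y then 16 else if E x y then -8 else 0)"
proof -
  assume x: "x \<in> D1" and y: "y \<in> D1"
  then have "x \<in> D" "y \<in> D" using D1D by auto
  then show ?thesis using vd_m[of x y] D1_m[OF x y] m_diag[of x] by auto
qed

lemma sum_v: "x \<in> D \<Longrightarrow> (\<Sum>c\<in>C. v x c) = 0"
  using s8[of x] cardC unfolding v_def s_def by (simp add: sum_subtractf sum_distrib_left[symmetric])
lemma v_pm: "v x c = 1 \<or> v x c = -1" unfolding v_def a_def by auto
lemma v_sq: "v x c * v x c = 1" using v_pm[of x c] by auto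

definition closed where "closed Z \<longleftrightarrow> Z \<subseteq> D1 \<and> (\<forall>x\<in>Z. \<forall>y\<in>D1. E x y \<longrightarrow> y \<in> Z)"

lemma finD1: "finite D1" using finD D1D finite_subset by blast
lemma closed_fin: "closed Z \<Longrightarrow> finite Z" unfolding closed_def using finD1 finite_subset by blast

lemma closed_sum_zero: assumes Z: "closed Z" and c: "c \<in> C" shows "(\<Sum>x\<in>Z. v x c) = 0"
proof -
  have ZD1: "Z \<subseteq> D1" using Z unfolding closed_def by auto
  have finZ: "finite Z" using closed_fin[OF Z] .
  have row: "(\<Sum>y\<in>Z. vd x y) = 0" if x: "x \<in> Z" for x
  proof -
    have xD1: "x \<in> D1" using x ZD1 by auto
    have "(\<Sum>y\<in>Z. vd x y) = (\<Sum>y\<in>Z. 16 * dl x y - 8 * a x y)"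
      by (intro sum.cong refl) (use ZD1 xD1 in \<open>auto simp: vd_D1 dl_def a_def irr\<close>)
    also have "\<dots> = 16 * (\<Sum>y\<in>Z. dl x y) - 8 * (\<Sum>y\<in>Z. a x y)"
      by (simp add: sum_subtractf sum_distrib_left)
    also have "(\<Sum>y\<in>Z. dl x y) = 1"
    proof -
      have "(\<Sum>y\<in>Z. dl x y) = (\<Sum>y\<in>Z. if y = x then 1 else 0)" unfolding dl_def by (intro sum.cong) auto
      also have "\<dots> = 1" using finZ x by (simp add: sum.delta')
      finally show ?thesis .
    qed
    also have "(\<Sum>y\<in>Z. a x y) = real (card {y\<in>Z. E x y})" unfolding a_def by (rule sum_ind[OF finZ])
    also have "{y\<in>Z. E x y} = nb1 x" unfolding nb1_def using Z x ZD1 unfolding closed_def by auto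
    finally show ?thesis using card_nb1[OF xD1] by simp
  qed
  have "(\<Sum>c\<in>C. (\<Sum>x\<in>Z. v x c) * (\<Sum>x\<in>Z. v x c)) = (\<Sum>c\<in>C. \<Sum>x\<in>Z. \<Sum>y\<in>Z. v x c * v y c)"
    by (simp add: sum_product)
  also have "\<dots> = (\<Sum>x\<in>Z. \<Sum>c\<in>C. \<Sum>y\<in>Z. v x c * v y c)" by (rule sum.swap)
  also have "\<dots> = (\<Sum>x\<in>Z. \<Sum>y\<in>Z. vd x y)" unfolding vd_def by (rule sum.cong[OF refl]) (rule sum.swap)
  also have "\<dots> = 0" using row by simp
  finally have "(\<Sum>c\<in>C. (\<Sum>x\<in>Z. v x c) * (\<Sum>x\<in>Z. v x c)) = 0" .
  then have "\<forall>c\<in>C. (\<Sum>x\<in>Z. v x c) * (\<Sum>x\<in>Z. v x c) = 0" using finC by (subst (asm) sum_nonneg_eq_0_iff) auto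
  then show ?thesis using c by auto
qed

lemma Cne: "\<exists>c. c \<in> C" using cardC by (metis card.empty ex_in_conv zero_neq_numeral)

lemma closed_even: assumes Z: "closed Z" shows "even (card Z)"
proof -
  obtain c where c: "c \<in> C" using Cne by auto
  have finZ: "finite Z" using closed_fin[OF Z] .
  have "0 = (\<Sum>x\<in>Z. v x c)" using closed_sum_zero[OF Z c] by simp
  also have "\<dots> = 2 * (\<Sum>x\<in>Z. a x c) - real (card Z)" unfolding v_def
    by (simp add: sum_subtractf sum_distrib_left)
  also have "(\<Sum>x\<in>Z. a x c) = real (card {x\<in>Z. E x c})" unfolding a_def by (rule sum_ind[OF finZ])
  finally have "card Z = 2 * card {x\<in>Z. E x c}" by linarith
  then show ?thesis by simp
qed

lemma closed_D1: "closed D1" unfolding closed_def by auto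
lemma closed_Inter: "F \<noteq> {} \<Longrightarrow> \<forall>Z\<in>F. closed Z \<Longrightarrow> closed (\<Inter>F)" unfolding closed_def by blast
lemma closed_diff: "closed Z1 \<Longrightarrow> closed Z2 \<Longrightarrow> closed (Z1 - Z2)"
  unfolding closed_def using symE by blast
lemma closed_int: "closed Z1 \<Longrightarrow> closed Z2 \<Longrightarrow> closed (Z1 \<inter> Z2)"
  unfolding closed_def by blast

definition cl where "cl x = \<Inter>{Z. closed Z \<and> x \<in> Z}"
lemma cl_closed: "x \<in> D1 \<Longrightarrow> closed (cl x)" unfolding cl_def
  by (rule closed_Inter) (use closed_D1 in auto)
lemma cl_in: "x \<in> D1 \<Longrightarrow> x \<in> cl x" unfolding cl_def using closed_D1 by auto
lemma cl_min: "closed Z \<Longrightarrow> x \<in> Z \<Longrightarrow> cl x \<subseteq> Z" unfolding cl_def by auto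
lemma cl_D1: "x \<in> D1 \<Longrightarrow> cl x \<subseteq> D1" using cl_min[OF closed_D1] by auto

lemma cl_eq: assumes x: "x \<in> D1" and w: "w \<in> cl x" shows "cl x = cl w"
proof -
  have wD1: "w \<in> D1" using w cl_D1[OF x] by auto
  have 1: "cl w \<subseteq> cl x" using cl_min[OF cl_closed[OF x] w] .
  have "x \<in> cl w"
  proof (rule ccontr)
    assume "x \<notin> cl w"
    then have "x \<in> cl x - cl w" using cl_in[OF x] by auto
    then have "cl x \<subseteq> cl x - cl w" using cl_min closed_diff[OF cl_closed[OF x] cl_closed[OF wD1]] by blast
    then show False using w cl_in[OF wD1] by auto
  qed
  then have "cl x \<subseteq> cl w" using cl_min[OF cl_closed[OF wD1]] by blast
  then show ?thesis using 1 by auto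
qed

lemma cl_disj: "x \<in> D1 \<Longrightarrow> y \<in> D1 \<Longrightarrow> cl x \<inter> cl y \<noteq> {} \<Longrightarrow> cl x = cl y"
  using cl_eq by blast

lemma nb1_sub: "nb1 x \<subseteq> D1" unfolding nb1_def by auto
lemma nb1_two: assumes x: "x \<in> D1" obtains y1 y2 where "nb1 x = {y1, y2}" "y1 \<noteq> y2"
  using card_nb1[OF x] by (auto simp: card_2_iff)

lemma closed_card4: assumes Z: "closed Z" and x: "x \<in> Z" shows "4 \<le> card Z"
proof -
  have xD1: "x \<in> D1" using Z x unfolding closed_def by auto
  obtain y1 y2 where y: "nb1 x = {y1, y2}" "y1 \<noteq> y2" using nb1_two[OF xD1] by blast
  have "y1 \<in> nb1 x" "y2 \<in> nb1 x" using y by auto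
  then have "y1 \<in> Z" "y2 \<in> Z" "x \<noteq> y1" "x \<noteq> y2" using Z x irr unfolding closed_def nb1_def by auto
  then have "{x, y1, y2} \<subseteq> Z" "card {x,y1,y2} = 3" using x y by auto
  then have "3 \<le> card Z" using closed_fin[OF Z] by (metis card_mono)
  moreover have "card Z \<noteq> 3" using closed_even[OF Z] by auto
  ultimately show ?thesis by simp
qed

lemma indep: assumes XD1: "X \<subseteq> D1" and noZ: "\<And>Z. closed Z \<Longrightarrow> Z \<subseteq> X \<Longrightarrow> Z = {}"
  shows "card X \<le> 15"
proof (rule ccontr)
  assume "\<not> card X \<le> 15"
  then have cX: "16 \<le> card X" by simp
  have finX: "finite X" using XD1 finD1 finite_subset by blast
  define I where "I = insert None (Some ` X)"
  define f where "f i c = (case i of None \<Rightarrow> 1 | Some x \<Rightarrow> v x c)" for i c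
  have finI: "finite I" unfolding I_def using finX by simp
  have cI: "card I = card X + 1" unfolding I_def using finX by (simp add: card_image)
  then have "card C < card I" using cX cardC by simp
  then obtain b where b1: "\<exists>i\<in>I. b i \<noteq> 0" and b2: "\<forall>c\<in>C. (\<Sum>i\<in>I. b i * f i c) = 0"
    using dep_lemma[OF finC finI] by blast
  define bx where "bx x = b (Some x)" for x
  define b0 where "b0 = b None"
  have eq: "(\<Sum>x\<in>X. bx x * v x c) + b0 = 0" if c: "c \<in> C" for c
  proof -
    have "(\<Sum>i\<in>I. b i * f i c) = b0 + (\<Sum>i\<in>Some ` X. b i * f i c)"
      unfolding I_def b0_def f_def using finX by simp
    also have "(\<Sum>i\<in>Some ` X. b i * f i c) = (\<Sum>x\<in>X. bx x * v x c)"
      by (subst sum.reindex) (auto simp: bx_def f_def)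
    finally show ?thesis using b2 c by simp
  qed
  define deg where "deg x = (\<Sum>y\<in>X. a x y)" for x
  have deg2: "deg x \<le> 2" if x: "x \<in> X" for x
  proof -
    have "deg x = real (card {y\<in>X. E x y})" unfolding deg_def a_def by (rule sum_ind[OF finX])
    also have "card {y\<in>X. E x y} \<le> card (nb1 x)"
      by (rule card_mono) (use XD1 in \<open>auto simp: nb1_def finD1 intro: finite_subset[OF _ finD1]\<close>)
    finally show ?thesis using card_nb1[of x] x XD1 by auto
  qed
  have vdX: "vd x y = 16 * dl x y - 8 * a x y" if "x \<in> X" "y \<in> X" for x y
    using subsetD[OF XD1 that(1)] subsetD[OF XD1 that(2)] vd_D1[of x y] by (auto simp: dl_def a_def irr)
  have "0 = (\<Sum>c\<in>C. ((\<Sum>x\<in>X. bx x * v x c) + b0) * ((\<Sum>x\<in>X. bx x * v x c) + b0))"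
    using eq by simp
  also have "\<dots> = (\<Sum>c\<in>C. (\<Sum>x\<in>X. \<Sum>y\<in>X. bx x * bx y * (v x c * v y c)) + 2 * b0 * (\<Sum>x\<in>X. bx x * v x c) + b0 * b0)"
    by (intro sum.cong refl) (simp add: algebra_simps sum_product sum_distrib_left)
  also have "\<dots> = (\<Sum>x\<in>X. \<Sum>y\<in>X. bx x * bx y * vd x y) + 2 * b0 * (\<Sum>x\<in>X. bx x * (\<Sum>c\<in>C. v x c)) + 16 * b0 * b0"
  proof -
    have 1: "(\<Sum>c\<in>C. \<Sum>x\<in>X. \<Sum>y\<in>X. bx x * bx y * (v x c * v y c)) = (\<Sum>x\<in>X. \<Sum>y\<in>X. bx x * bx y * vd x y)"
    proof -
      have "(\<Sum>c\<in>C. \<Sum>x\<in>X. \<Sum>y\<in>X. bx x * bx y * (v x c * v y c)) = (\<Sum>x\<in>X. \<Sum>c\<in>C. \<Sum>y\<in>X. bx x * bx y * (v x c * v y c))"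
        by (rule sum.swap)
      also have "\<dots> = (\<Sum>x\<in>X. \<Sum>y\<in>X. \<Sum>c\<in>C. bx x * bx y * (v x c * v y c))"
        by (rule sum.cong[OF refl]) (rule sum.swap)
      also have "\<dots> = (\<Sum>x\<in>X. \<Sum>y\<in>X. bx x * bx y * vd x y)"
        unfolding vd_def by (simp add: sum_distrib_left)
      finally show ?thesis .
    qed
    have 2: "(\<Sum>c\<in>C. 2 * b0 * (\<Sum>x\<in>X. bx x * v x c)) = 2 * b0 * (\<Sum>x\<in>X. bx x * (\<Sum>c\<in>C. v x c))"
    proof -
      have "(\<Sum>c\<in>C. 2 * b0 * (\<Sum>x\<in>X. bx x * v x c)) = 2 * b0 * (\<Sum>c\<in>C. \<Sum>x\<in>X. bx x * v x c)"
        by (simp add: sum_distrib_left)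
      also have "(\<Sum>c\<in>C. \<Sum>x\<in>X. bx x * v x c) = (\<Sum>x\<in>X. \<Sum>c\<in>C. bx x * v x c)" by (rule sum.swap)
      also have "\<dots> = (\<Sum>x\<in>X. bx x * (\<Sum>c\<in>C. v x c))" by (simp add: sum_distrib_left)
      finally show ?thesis .
    qed
    show ?thesis using 1 2 cardC by (simp add: sum.distrib)
  qed
  also have "(\<Sum>x\<in>X. bx x * (\<Sum>c\<in>C. v x c)) = 0"
  proof -
    have "\<forall>x\<in>X. (\<Sum>c\<in>C. v x c) = 0" using sum_v XD1 D1D by (meson subsetD)
    then show ?thesis by simp
  qed
  also have "(\<Sum>x\<in>X. \<Sum>y\<in>X. bx x * bx y * vd x y) = 16 * (\<Sum>x\<in>X. bx x * bx x) - 8 * (\<Sum>x\<in>X. \<Sum>y\<in>X. a x y * bx x * bx y)"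
  proof -
    have "(\<Sum>x\<in>X. \<Sum>y\<in>X. bx x * bx y * vd x y) = (\<Sum>x\<in>X. \<Sum>y\<in>X. 16 * (bx x * bx y * dl x y) - 8 * (a x y * bx x * bx y))"
      by (intro sum.cong refl) (simp add: vdX algebra_simps)
    also have "\<dots> = 16 * (\<Sum>x\<in>X. \<Sum>y\<in>X. bx x * bx y * dl x y) - 8 * (\<Sum>x\<in>X. \<Sum>y\<in>X. a x y * bx x * bx y)"
      by (simp add: sum_subtractf sum_distrib_left)
    also have "(\<Sum>x\<in>X. \<Sum>y\<in>X. bx x * bx y * dl x y) = (\<Sum>x\<in>X. bx x * bx x)"
    proof (rule sum.cong[OF refl])
      fix x assume x: "x \<in> X"
      have "(\<Sum>y\<in>X. bx x * bx y * dl x y) = (\<Sum>y\<in>X. if y = x then bx x * bx y else 0)"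
        unfolding dl_def by (intro sum.cong) auto
      also have "\<dots> = bx x * bx x" using finX x by (simp add: sum.delta')
      finally show "(\<Sum>y\<in>X. bx x * bx y * dl x y) = bx x * bx x" .
    qed
    finally show ?thesis .
  qed
  also have "(\<Sum>x\<in>X. \<Sum>y\<in>X. a x y * bx x * bx y) =
      (\<Sum>x\<in>X. deg x * (bx x * bx x)) - (1/2) * (\<Sum>x\<in>X. \<Sum>y\<in>X. a x y * ((bx x - bx y) * (bx x - bx y)))"
  proof -
    have sw: "(\<Sum>x\<in>X. \<Sum>y\<in>X. a x y * (bx y * bx y)) = (\<Sum>x\<in>X. deg x * (bx x * bx x))"
      unfolding deg_def by (subst sum.swap) (simp add: a_sym sum_distrib_right)
    have "(\<Sum>x\<in>X. \<Sum>y\<in>X. a x y * ((bx x - bx y) * (bx x - bx y))) =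
        (\<Sum>x\<in>X. \<Sum>y\<in>X. a x y * (bx x * bx x)) + (\<Sum>x\<in>X. \<Sum>y\<in>X. a x y * (bx y * bx y)) - 2 * (\<Sum>x\<in>X. \<Sum>y\<in>X. a x y * bx x * bx y)"
      by (simp add: algebra_simps sum.distrib sum_subtractf sum_distrib_left)
    also have "(\<Sum>x\<in>X. \<Sum>y\<in>X. a x y * (bx x * bx x)) = (\<Sum>x\<in>X. deg x * (bx x * bx x))"
      unfolding deg_def by (simp add: sum_distrib_right)
    finally have h: "(\<Sum>x\<in>X. \<Sum>y\<in>X. a x y * ((bx x - bx y) * (bx x - bx y))) =
        (\<Sum>x\<in>X. deg x * (bx x * bx x)) + (\<Sum>x\<in>X. \<Sum>y\<in>X. a x y * (bx y * bx y)) - 2 * (\<Sum>x\<in>X. \<Sum>y\<in>X. a x y * bx x * bx y)" .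
    show ?thesis using h sw by linarith
  qed
  finally have main: "0 = 4 * (\<Sum>x\<in>X. \<Sum>y\<in>X. a x y * ((bx x - bx y) * (bx x - bx y)))
      + 8 * (\<Sum>x\<in>X. (2 - deg x) * (bx x * bx x)) + 16 * (b0 * b0)"
    by (simp add: algebra_simps sum_subtractf sum.distrib sum_distrib_left)
  have n1: "0 \<le> (\<Sum>x\<in>X. \<Sum>y\<in>X. a x y * ((bx x - bx y) * (bx x - bx y)))"
    by (intro sum_nonneg mult_nonneg_nonneg a_nn zero_le_square)
  have t2: "0 \<le> (2 - deg x) * (bx x * bx x)" if "x \<in> X" for x
    using deg2[OF that] by (intro mult_nonneg_nonneg zero_le_square) simp
  have n2: "0 \<le> (\<Sum>x\<in>X. (2 - deg x) * (bx x * bx x))"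
    by (intro sum_nonneg t2)
  have n3: "0 \<le> b0 * b0" by simp
  have z3: "b0 * b0 = 0" using main n1 n2 n3 by linarith
  then have b00: "b0 = 0" by simp
  have z1: "(\<Sum>x\<in>X. \<Sum>y\<in>X. a x y * ((bx x - bx y) * (bx x - bx y))) = 0" using main n1 n2 n3 by linarith
  have z2: "(\<Sum>x\<in>X. (2 - deg x) * (bx x * bx x)) = 0" using main n1 n2 n3 by linarith
  have e1: "\<forall>x\<in>X. \<forall>y\<in>X. a x y * ((bx x - bx y) * (bx x - bx y)) = 0"
  proof -
    have inn: "0 \<le> (\<Sum>y\<in>X. a x y * ((bx x - bx y) * (bx x - bx y)))" for x
      by (intro sum_nonneg mult_nonneg_nonneg a_nn zero_le_square)
    have "\<forall>x\<in>X. (\<Sum>y\<in>X. a x y * ((bx x - bx y) * (bx x - bx y))) = 0"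
      using sum_nonneg_eq_0_iff[OF finX, of "\<lambda>x. \<Sum>y\<in>X. a x y * ((bx x - bx y) * (bx x - bx y))"] z1 inn by blast
    moreover have "\<forall>y\<in>X. a x y * ((bx x - bx y) * (bx x - bx y)) = 0"
      if "(\<Sum>y\<in>X. a x y * ((bx x - bx y) * (bx x - bx y))) = 0" for x
      using sum_nonneg_eq_0_iff[OF finX, of "\<lambda>y. a x y * ((bx x - bx y) * (bx x - bx y))"] that
        mult_nonneg_nonneg[OF a_nn zero_le_square] by blast
    ultimately show ?thesis by blast
  qed
  have e2: "\<forall>x\<in>X. (2 - deg x) * (bx x * bx x) = 0"
    using sum_nonneg_eq_0_iff[OF finX, of "\<lambda>x. (2 - deg x) * (bx x * bx x)"] z2 t2 by blast
  define Z where "Z = {x\<in>X. bx x \<noteq> 0}"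
  have "closed Z"
    unfolding closed_def
  proof (intro conjI ballI impI)
    show "Z \<subseteq> D1" unfolding Z_def using XD1 by auto
  next
    fix x y assume x: "x \<in> Z" and y: "y \<in> D1" and xy: "E x y"
    have xX: "x \<in> X" and bxn: "bx x \<noteq> 0" using x unfolding Z_def by auto
    have "deg x = 2" using e2 xX bxn by auto
    then have cd: "card {y\<in>X. E x y} = 2" using sum_ind[OF finX, of "\<lambda>y. E x y"] unfolding deg_def a_def by simp
    have "{y\<in>X. E x y} \<subseteq> nb1 x" unfolding nb1_def using XD1 by auto
    moreover have "finite (nb1 x)" using finD1 nb1_sub finite_subset by blast
    ultimately have "{y\<in>X. E x y} = nb1 x" using cd card_nb1[of x] xX XD1 by (metis card_subset_eq subsetD)
    then have yX: "y \<in> X" using y xy unfolding nb1_def by auto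
    have "a x y * ((bx x - bx y) * (bx x - bx y)) = 0" using e1 xX yX by auto
    then have "bx y = bx x" using xy unfolding a_def by simp
    then show "y \<in> Z" using yX bxn unfolding Z_def by simp
  qed
  then have "Z = {}" using noZ unfolding Z_def by auto
  then have "\<forall>x\<in>X. bx x = 0" unfolding Z_def by auto
  then have "\<forall>i\<in>I. b i = 0" unfolding I_def bx_def using b00 b0_def by auto
  then show False using b1 by auto
qed

lemma card2_eq: "card S = 2 \<Longrightarrow> p \<in> S \<Longrightarrow> r \<in> S \<Longrightarrow> p \<noteq> r \<Longrightarrow> S = {p, r}"
  by (auto simp: card_2_iff)

lemma nb1_other: assumes y: "y \<in> D1" and x: "x \<in> nb1 y" obtains z where "nb1 y = {x, z}" "z \<noteq> x"
proof -
  obtain u1 u2 where u: "nb1 y = {u1, u2}" "u1 \<noteq> u2" using nb1_two[OF y] by blast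
  show ?thesis
  proof (cases "x = u1")
    case True then show ?thesis using that u by auto
  next
    case False then have "x = u2" using x u by auto
    then show ?thesis using that u by (auto simp: insert_commute)
  qed
qed

lemma nb1_sym: "x \<in> D1 \<Longrightarrow> y \<in> nb1 x \<Longrightarrow> x \<in> nb1 y" unfolding nb1_def using symE by auto

lemma four_cycle: assumes x: "x \<in> D1" and y: "nb1 x = {y1, y2}" "y1 \<noteq> y2"
  shows "\<exists>w\<in>D1. w \<noteq> x \<and> E w y1 \<and> E w y2"
proof (rule ccontr)
  assume bad: "\<not> (\<exists>w\<in>D1. w \<noteq> x \<and> E w y1 \<and> E w y2)"
  have y1n: "y1 \<in> nb1 x" and y2n: "y2 \<in> nb1 x" using y by auto
  have y1D: "y1 \<in> D1" and y2D: "y2 \<in> D1" and Exy1: "E x y1" and Exy2: "E x y2"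
    using y1n y2n unfolding nb1_def by auto
  have xy1: "x \<noteq> y1" and xy2: "x \<noteq> y2" using Exy1 Exy2 irr by auto
  have noE: "\<not> E y1 y2"
  proof
    assume E12: "E y1 y2"
    have n1: "nb1 y1 = {x, y2}"
      by (rule card2_eq[OF card_nb1[OF y1D]]) (use nb1_sym[OF x y1n] E12 y2D xy2 in \<open>auto simp: nb1_def\<close>)
    have n2: "nb1 y2 = {x, y1}"
      by (rule card2_eq[OF card_nb1[OF y2D]]) (use nb1_sym[OF x y2n] E12 y1D xy1 symE in \<open>auto simp: nb1_def\<close>)
    have cl3: "closed {x, y1, y2}"
      unfolding closed_def
    proof (intro conjI ballI impI)
      show "{x, y1, y2} \<subseteq> D1" using x y1D y2D by auto
    next
      fix u w assume u: "u \<in> {x, y1, y2}" and w: "w \<in> D1" and Euw: "E u w"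
      then have "w \<in> nb1 u" unfolding nb1_def by auto
      then show "w \<in> {x, y1, y2}" using u y n1 n2 by auto
    qed
    have "card {x, y1, y2} = 3" using xy1 xy2 y(2) by auto
    then show False using closed_even[OF cl3] by simp
  qed
  obtain z1 where z1: "nb1 y1 = {x, z1}" "z1 \<noteq> x" using nb1_other[OF y1D nb1_sym[OF x y1n]] by blast
  obtain z2 where z2: "nb1 y2 = {x, z2}" "z2 \<noteq> x" using nb1_other[OF y2D nb1_sym[OF x y2n]] by blast
  have z1D: "z1 \<in> D1" and E1: "E y1 z1" using z1 unfolding nb1_def by auto
  have z2D: "z2 \<in> D1" and E2: "E y2 z2" using z2 unfolding nb1_def by auto
  have z1y2: "z1 \<noteq> y2" using E1 noE by auto
  have z2y1: "z2 \<noteq> y1" using E2 noE symE by auto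
  have z12: "z1 \<noteq> z2" using bad z1D z1(2) E1 E2 symE by auto
  have z1y1: "z1 \<noteq> y1" and z2y2: "z2 \<noteq> y2" using E1 E2 irr by auto
  have clx: "closed (cl x)" using cl_closed[OF x] .
  have sub: "{x, y1, y2, z1, z2} \<subseteq> cl x"
  proof -
    have "x \<in> cl x" using cl_in[OF x] .
    moreover have "y1 \<in> cl x" "y2 \<in> cl x" using clx cl_in[OF x] y1D y2D Exy1 Exy2 unfolding closed_def by auto
    moreover have "z1 \<in> cl x" "z2 \<in> cl x" using clx calculation z1D z2D E1 E2 unfolding closed_def by auto
    ultimately show ?thesis by auto
  qed
  have c5: "card {x, y1, y2, z1, z2} = 5"
    using xy1 xy2 z1(2) z2(2) y(2) z1y2 z2y1 z12 z1y1 z2y2 by auto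
  have "5 \<le> card (cl x)" using card_mono[OF closed_fin[OF clx] sub] c5 by simp
  moreover have "even (card (cl x))" using closed_even[OF clx] .
  ultimately have c6: "6 \<le> card (cl x)"
  proof (cases "card (cl x) = 5")
    case True then show ?thesis using \<open>even (card (cl x))\<close> by simp
  next
    case False then show ?thesis using \<open>5 \<le> card (cl x)\<close> by simp
  qed
  define comps where "comps = cl ` D1"
  have fcomps: "finite comps" unfolding comps_def using finD1 by simp
  have disj: "pairwise disjnt comps"
    unfolding comps_def pairwise_def disjnt_def using cl_disj by blast
  have Ucomps: "\<Union>comps = D1" unfolding comps_def using cl_D1 cl_in by blast
  have fin_each: "\<And>K. K \<in> comps \<Longrightarrow> finite K" unfolding comps_def using cl_closed closed_fin by blast
  have "card D1 = sum card comps" using card_Union_disjoint[OF disj fin_each] Ucomps by simp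
  then have s20: "sum card comps = 20" using card_D1 by simp
  have ge4: "\<And>K. K \<in> comps \<Longrightarrow> 4 \<le> card K"
    unfolding comps_def using cl_closed cl_in closed_card4 by blast
  have clxc: "cl x \<in> comps" unfolding comps_def using x by simp
  have "sum card comps = card (cl x) + sum card (comps - {cl x})"
    using fcomps clxc by (simp add: sum.remove)
  moreover have "sum card (comps - {cl x}) \<ge> 4 * card (comps - {cl x})"
    using sum_mono[of "comps - {cl x}" "\<lambda>_. 4" card] ge4 by simp
  ultimately have "20 \<ge> 6 + 4 * card (comps - {cl x})" using s20 c6 by linarith
  moreover have "card (comps - {cl x}) = card comps - 1" using fcomps clxc by simp
  ultimately have ncomps: "card comps \<le> 4" by linarith
  define rep where "rep K = (SOME w. w \<in> K)" for K :: "'a set"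
  define H where "H = rep ` comps"
  have repin: "\<And>w. w \<in> D1 \<Longrightarrow> rep (cl w) \<in> cl w" unfolding rep_def using cl_in by (meson someI)
  have HD1: "H \<subseteq> D1" unfolding H_def comps_def using repin cl_D1 by blast
  have cH: "card H \<le> 4" unfolding H_def using card_image_le[OF fcomps, of rep] ncomps by simp
  define X where "X = D1 - H"
  have XD1: "X \<subseteq> D1" unfolding X_def by auto
  have "card X = card D1 - card H" unfolding X_def using HD1 finD1 by (simp add: card_Diff_subset finite_subset)
  then have cX: "card X \<ge> 16" using card_D1 cH by simp
  have noZ: "Z = {}" if Z: "closed Z" and ZX: "Z \<subseteq> X" for Z
  proof (rule ccontr)
    assume "Z \<noteq> {}"
    then obtain w where w: "w \<in> Z" by auto
    have wD1: "w \<in> D1" using w ZX XD1 by auto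
    have "rep (cl w) \<in> Z" using cl_min[OF Z w] repin[OF wD1] by auto
    moreover have "rep (cl w) \<in> H" unfolding H_def comps_def using wD1 by simp
    ultimately show False using ZX unfolding X_def by auto
  qed
  have "card X \<le> 15" by (rule indep[OF XD1 noZ])
  then show False using cX by simp
qed

definition opp where "opp x = (SOME w. w \<in> D1 \<and> w \<noteq> x \<and> nb1 w = nb1 x)"

lemma opp_ex: assumes x: "x \<in> D1" shows "\<exists>w. w \<in> D1 \<and> w \<noteq> x \<and> nb1 w = nb1 x"
proof -
  obtain y1 y2 where y: "nb1 x = {y1, y2}" "y1 \<noteq> y2" using nb1_two[OF x] by blast
  obtain w where w: "w \<in> D1" "w \<noteq> x" "E w y1" "E w y2" using four_cycle[OF x y] by blast
  have "y1 \<in> D1" "y2 \<in> D1" using y nb1_sub by auto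
  then have "nb1 w = {y1, y2}" using card2_eq[OF card_nb1[OF w(1)], of y1 y2] w y(2) unfolding nb1_def by auto
  then show ?thesis using w y by auto
qed

lemma opp: assumes x: "x \<in> D1" shows "opp x \<in> D1" "opp x \<noteq> x" "nb1 (opp x) = nb1 x"
  using someI_ex[OF opp_ex[OF x]] unfolding opp_def by auto

lemma opp_unique: assumes x: "x \<in> D1" and w: "w \<in> D1" "w \<noteq> x" "nb1 w = nb1 x" shows "w = opp x"
proof -
  obtain y1 y2 where y: "nb1 x = {y1, y2}" "y1 \<noteq> y2" using nb1_two[OF x] by blast
  have y1n: "y1 \<in> nb1 x" using y by auto
  have y1D: "y1 \<in> D1" using y1n nb1_sub by auto
  have "x \<in> nb1 y1" using nb1_sym[OF x y1n] .
  moreover have "w \<in> nb1 y1" using nb1_sym[OF w(1)] y1n w(3) by auto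
  moreover have "opp x \<in> nb1 y1" using nb1_sym[OF opp(1)[OF x]] y1n opp(3)[OF x] by auto
  ultimately have "nb1 y1 = {x, w}" "nb1 y1 = {x, opp x}"
    using card2_eq[OF card_nb1[OF y1D]] w(2) opp(2)[OF x] by metis+
  then show ?thesis using w(2) opp(2)[OF x] by (metis doubleton_eq_iff)
qed

lemma opp_opp: "x \<in> D1 \<Longrightarrow> opp (opp x) = x"
  using opp_unique[of "opp x" x] opp[of x] by auto

lemma opp_nE: "x \<in> D1 \<Longrightarrow> \<not> E x (opp x)"
proof
  assume x: "x \<in> D1" and e: "E x (opp x)"
  then have "opp x \<in> nb1 x" using opp(1)[OF x] unfolding nb1_def by auto
  then have "opp x \<in> nb1 (opp x)" using opp(3)[OF x] by simp
  then show False using irr unfolding nb1_def by auto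
qed

lemma nb_struct: assumes x: "x \<in> D1" and y: "y \<in> nb1 x" shows "nb1 y = {x, opp x}"
proof -
  have yD: "y \<in> D1" using y nb1_sub by auto
  have "x \<in> nb1 y" using nb1_sym[OF x y] .
  moreover have "opp x \<in> nb1 y" using nb1_sym[OF opp(1)[OF x]] y opp(3)[OF x] by auto
  ultimately show ?thesis using card2_eq[OF card_nb1[OF yD]] opp(2)[OF x] by metis
qed

lemma opp_nb: assumes x: "x \<in> D1" and y: "y \<in> nb1 x" shows "opp y \<in> nb1 x" "opp y \<noteq> y"
proof -
  have yD: "y \<in> D1" using y nb1_sub by auto
  obtain y' where y': "nb1 x = {y, y'}" "y' \<noteq> y" using nb1_other[OF x y] by blast
  have y'n: "y' \<in> nb1 x" using y' by auto
  have y'D: "y' \<in> D1" using y'n nb1_sub by auto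
  have "nb1 y' = nb1 y" using nb_struct[OF x y] nb_struct[OF x y'n] by simp
  then have "y' = opp y" using opp_unique[OF yD y'D y'(2)] by simp
  then show "opp y \<in> nb1 x" "opp y \<noteq> y" using y' by auto
qed

lemma quad_sum: assumes x: "x \<in> D1" and y: "y \<in> nb1 x" and c: "c \<in> C"
  shows "v x c + v (opp x) c + v y c + v (opp y) c = 0"
proof -
  have yD: "y \<in> D1" using y nb1_sub by auto
  have oxD: "opp x \<in> D1" using opp(1)[OF x] .
  have oyD: "opp y \<in> D1" using opp(1)[OF yD] .
  note on = opp_nb[OF x y]
  have nbx: "nb1 x = {y, opp y}" using card2_eq[OF card_nb1[OF x] y on(1)] on(2) by metis
  have nby: "nb1 y = {x, opp x}" using nb_struct[OF x y] .
  define Qs where "Qs = {x, opp x, y, opp y}"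
  have "closed Qs" unfolding closed_def
  proof (intro conjI ballI impI)
    show "Qs \<subseteq> D1" unfolding Qs_def using x oxD yD oyD by auto
  next
    fix u w assume u: "u \<in> Qs" and w: "w \<in> D1" and Euw: "E u w"
    then have wn: "w \<in> nb1 u" unfolding nb1_def by auto
    have "nb1 u = {y, opp y} \<or> nb1 u = {x, opp x}"
      using u nbx nby opp(3)[OF x] opp(3)[OF yD] unfolding Qs_def by auto
    then show "w \<in> Qs" using wn unfolding Qs_def by auto
  qed
  then have "(\<Sum>z\<in>Qs. v z c) = 0" using closed_sum_zero c by blast
  moreover have "x \<noteq> opp x" "y \<noteq> opp y" using opp(2)[OF x] opp(2)[OF yD] by auto
  moreover have "x \<noteq> y" "x \<noteq> opp y" "opp x \<noteq> y" "opp x \<noteq> opp y"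
    using y on(1) irr opp_nE[OF x] opp(3)[OF x] unfolding nb1_def by auto
  ultimately show ?thesis unfolding Qs_def by (simp add: algebra_simps)
qed

definition dv where "dv x c = (v x c - v (opp x) c) / 2"
definition sv where "sv x c = (v x c + v (opp x) c) / 2"
definition ip :: "('a \<Rightarrow> real) \<Rightarrow> ('a \<Rightarrow> real) \<Rightarrow> real" where "ip f h = (\<Sum>c\<in>C. f c * h c)"

lemma oppD1: "x \<in> D1 \<Longrightarrow> opp x \<in> D1" using opp(1) .

lemma ip_dd: "ip (dv x) (dv z) = (vd x z - vd x (opp z) - vd (opp x) z + vd (opp x) (opp z)) / 4"
  unfolding ip_def dv_def vd_def by (simp add: sum_divide_distrib[symmetric] sum_subtractf sum.distrib algebra_simps)
lemma ip_ss: "ip (sv x) (sv z) = (vd x z + vd x (opp z) + vd (opp x) z + vd (opp x) (opp z)) / 4"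
  unfolding ip_def sv_def vd_def by (simp add: sum_divide_distrib[symmetric] sum_subtractf sum.distrib algebra_simps)
lemma ip_ds: "ip (dv x) (sv z) = (vd x z + vd x (opp z) - vd (opp x) z - vd (opp x) (opp z)) / 4"
  unfolding ip_def sv_def dv_def vd_def by (simp add: sum_divide_distrib[symmetric] sum_subtractf sum.distrib algebra_simps)
lemma ip_sd: "ip (sv x) (dv z) = (vd x z - vd x (opp z) + vd (opp x) z - vd (opp x) (opp z)) / 4"
  unfolding ip_def sv_def dv_def vd_def by (simp add: sum_divide_distrib[symmetric] sum_subtractf sum.distrib algebra_simps)

lemma rel_cases: assumes x: "x \<in> D1" and z: "z \<in> D1"
  shows "z = x \<or> z = opp x \<or> (z \<in> nb1 x \<and> opp z \<in> nb1 x) \<or>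
    (z \<noteq> x \<and> z \<noteq> opp x \<and> opp z \<noteq> x \<and> opp z \<noteq> opp x \<and> \<not> E x z \<and> \<not> E x (opp z) \<and> \<not> E (opp x) z \<and> \<not> E (opp x) (opp z))"
proof -
  consider "z = x" | "z = opp x" | "z \<in> nb1 x" | "z \<noteq> x" "z \<noteq> opp x" "z \<notin> nb1 x" by blast
  then show ?thesis
  proof cases
    case 3 then show ?thesis using opp_nb[OF x] by blast
  next
    case 4
    have ozD: "opp z \<in> D1" using oppD1[OF z] .
    have oz1: "opp z \<noteq> x" using 4 opp_opp[OF z] opp_opp[OF x] by metis
    have oz2: "opp z \<noteq> opp x" using 4 opp_opp[OF z] opp_opp[OF x] by metis
    have e1: "\<not> E x z" using 4 z unfolding nb1_def by auto
    have e2: "\<not> E x (opp z)"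
    proof
      assume "E x (opp z)"
      then have "opp z \<in> nb1 x" using ozD unfolding nb1_def by auto
      then have "opp (opp z) \<in> nb1 x" using opp_nb[OF x] by blast
      then show False using 4 opp_opp[OF z] by simp
    qed
    have e3: "\<not> E (opp x) z" using e1 z opp(3)[OF x] unfolding nb1_def by auto
    have e4: "\<not> E (opp x) (opp z)" using e2 ozD opp(3)[OF x] unfolding nb1_def by auto
    show ?thesis using 4 oz1 oz2 e1 e2 e3 e4 by blast
  qed auto
qed

lemma nb1_not: assumes x: "x \<in> D1" and z: "z \<in> nb1 x" shows "z \<noteq> x" "z \<noteq> opp x" "E x z" "E (opp x) z"
proof -
  show "E x z" using z unfolding nb1_def by auto
  then show "z \<noteq> x" using irr by auto
  show "E (opp x) z" using z opp(3)[OF x] unfolding nb1_def by auto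
  then show "z \<noteq> opp x" using irr by auto
qed

lemma dots:
  assumes x: "x \<in> D1" and z: "z \<in> D1"
  shows "ip (dv x) (dv z) = 8 * dl x z - 8 * dl (opp x) z"
    and "ip (sv x) (sv z) = 8 * dl x z + 8 * dl (opp x) z - 8 * a x z"
    and "ip (dv x) (sv z) = 0"
    and "ip (sv x) (dv z) = 0"
proof -
  have ox: "opp x \<in> D1" "opp x \<noteq> x" "\<not> E x (opp x)" "\<not> E (opp x) x" using oppD1[OF x] opp(2)[OF x] opp_nE[OF x] symE by auto
  have oz: "opp z \<in> D1" using oppD1[OF z] .
  have vdsym: "vd p r = vd r p" for p r unfolding vd_def by (simp add: mult.commute)
  note V = vd_D1 x z ox(1) oz
  have "(ip (dv x) (dv z) = 8 * dl x z - 8 * dl (opp x) z) \<and> (ip (sv x) (sv z) = 8 * dl x z + 8 * dl (opp x) z - 8 * a x z)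
      \<and> ip (dv x) (sv z) = 0 \<and> ip (sv x) (dv z) = 0"
  proof -
    from rel_cases[OF x z] consider "z = x" | "z = opp x" | "z \<in> nb1 x" "opp z \<in> nb1 x" |
      "z \<noteq> x" "z \<noteq> opp x" "opp z \<noteq> x" "opp z \<noteq> opp x" "\<not> E x z" "\<not> E x (opp z)" "\<not> E (opp x) z" "\<not> E (opp x) (opp z)"
      by blast
    then show ?thesis
    proof cases
      case 1
      then show ?thesis unfolding ip_dd ip_ss ip_ds ip_sd using ox vd_D1[OF x x] vd_D1[OF x ox(1)] vd_D1[OF ox(1) x] vd_D1[OF ox(1) ox(1)]
        by (simp add: dl_def a_def irr symE)
    next
      case 2
      then have ozx: "opp z = x" using opp_opp[OF x] by simp
      show ?thesis unfolding ip_dd ip_ss ip_ds ip_sd using 2 ozx ox vd_D1[OF x x] vd_D1[OF x ox(1)] vd_D1[OF ox(1) x] vd_D1[OF ox(1) ox(1)]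
        by (auto simp: dl_def a_def irr dest: symE)
    next
      case 3
      note n1 = nb1_not[OF x 3(1)] and n2 = nb1_not[OF x 3(2)]
      have zoz: "opp z \<noteq> z" using opp(2)[OF z] .
      show ?thesis unfolding ip_dd ip_ss ip_ds ip_sd
        using n1 n2 vd_D1[OF x z] vd_D1[OF x oz] vd_D1[OF ox(1) z] vd_D1[OF ox(1) oz]
        by (auto simp: dl_def a_def)
    next
      case 4
      show ?thesis unfolding ip_dd ip_ss ip_ds ip_sd
        using 4 vd_D1[OF x z] vd_D1[OF x oz] vd_D1[OF ox(1) z] vd_D1[OF ox(1) oz]
        by (auto simp: dl_def a_def)
    qed
  qed
  then show "ip (dv x) (dv z) = 8 * dl x z - 8 * dl (opp x) z"
    and "ip (sv x) (sv z) = 8 * dl x z + 8 * dl (opp x) z - 8 * a x z"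
    and "ip (dv x) (sv z) = 0"
    and "ip (sv x) (dv z) = 0" by auto
qed

lemma sum_dl_D1: "x \<in> D1 \<Longrightarrow> (\<Sum>z\<in>D1. dl x z * F z) = F x"
proof -
  assume x: "x \<in> D1"
  have "(\<Sum>z\<in>D1. dl x z * F z) = (\<Sum>z\<in>D1. if z = x then F z else 0)" unfolding dl_def by (intro sum.cong) auto
  also have "\<dots> = F x" using finD1 x by (simp add: sum.delta')
  finally show ?thesis .
qed

lemma sum_a_D1: "(\<Sum>z\<in>D1. a x z * F z) = (\<Sum>z\<in>nb1 x. F z)"
proof -
  have "(\<Sum>z\<in>D1. a x z * F z) = (\<Sum>z\<in>D1. if E x z then F z else 0)" unfolding a_def by (intro sum.cong) auto
  also have "\<dots> = (\<Sum>z\<in>nb1 x. F z)" unfolding nb1_def using finD1 by (simp add: sum.inter_filter)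
  finally show ?thesis .
qed

lemma dv_opp: "x \<in> D1 \<Longrightarrow> dv (opp x) c = - dv x c" unfolding dv_def using opp_opp by (simp add: field_simps)
lemma sv_opp: "x \<in> D1 \<Longrightarrow> sv (opp x) c = sv x c" unfolding sv_def using opp_opp by simp
lemma sv_nb: "x \<in> D1 \<Longrightarrow> z \<in> nb1 x \<Longrightarrow> c \<in> C \<Longrightarrow> sv z c = - sv x c"
  unfolding sv_def using quad_sum[of x z c] by (simp add: field_simps)

lemma sum_nb1_sv: assumes x: "x \<in> D1" and c: "c \<in> C" shows "(\<Sum>z\<in>nb1 x. sv z c) = - 2 * sv x c"
proof -
  have "(\<Sum>z\<in>nb1 x. sv z c) = (\<Sum>z\<in>nb1 x. - sv x c)" by (intro sum.cong refl) (simp add: sv_nb x c)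
  then show ?thesis using card_nb1[OF x] by simp
qed

definition fam :: "'a + 'a \<Rightarrow> 'a \<Rightarrow> real" where
  "fam i = (case i of Inl x \<Rightarrow> dv x | Inr x \<Rightarrow> sv x)"
definition lamf :: "'a + 'a \<Rightarrow> real" where
  "lamf i = (case i of Inl x \<Rightarrow> 1/16 | Inr x \<Rightarrow> 1/32)"
definition II where "II = Inl ` D1 \<union> Inr ` D1"

lemma finII: "finite II" unfolding II_def using finD1 by simp
lemma sumII: "(\<Sum>j\<in>II. F j) = (\<Sum>z\<in>D1. F (Inl z)) + (\<Sum>z\<in>D1. F (Inr z))"
proof -
  have "(\<Sum>j\<in>II. F j) = (\<Sum>j\<in>Inl ` D1. F j) + (\<Sum>j\<in>Inr ` D1. F j)"
    unfolding II_def using finD1 by (subst sum.union_disjoint) auto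
  also have "\<dots> = (\<Sum>z\<in>D1. F (Inl z)) + (\<Sum>z\<in>D1. F (Inr z))"
    by (simp add: sum.reindex)
  finally show ?thesis .
qed

lemma proj: assumes i: "i \<in> II" and c: "c \<in> C"
  shows "(\<Sum>j\<in>II. lamf j * (\<Sum>d\<in>C. fam i d * fam j d) * fam j c) = fam i c"
proof -
  have ipf: "(\<Sum>d\<in>C. f d * h d) = ip f h" for f h unfolding ip_def ..
  show ?thesis
  proof (cases i)
    case (Inl x)
    then have x: "x \<in> D1" using i unfolding II_def by auto
    have "(\<Sum>j\<in>II. lamf j * (\<Sum>d\<in>C. fam i d * fam j d) * fam j c)
        = (\<Sum>z\<in>D1. 1/16 * (8 * dl x z - 8 * dl (opp x) z) * dv z c) + (\<Sum>z\<in>D1. 1/32 * 0 * sv z c)"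
      unfolding sumII ipf fam_def lamf_def Inl using dots(1,3)[OF x] by simp
    also have "\<dots> = (1/2) * (\<Sum>z\<in>D1. dl x z * dv z c) - (1/2) * (\<Sum>z\<in>D1. dl (opp x) z * dv z c)"
      by (simp add: algebra_simps sum_subtractf sum_distrib_left)
    also have "\<dots> = dv x c" using sum_dl_D1[OF x] sum_dl_D1[OF oppD1[OF x]] dv_opp[OF x] by simp
    finally show ?thesis unfolding Inl fam_def by simp
  next
    case (Inr x)
    then have x: "x \<in> D1" using i unfolding II_def by auto
    have "(\<Sum>j\<in>II. lamf j * (\<Sum>d\<in>C. fam i d * fam j d) * fam j c)
        = (\<Sum>z\<in>D1. 1/16 * 0 * dv z c) + (\<Sum>z\<in>D1. 1/32 * (8 * dl x z + 8 * dl (opp x) z - 8 * a x z) * sv z c)"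
      unfolding sumII ipf fam_def lamf_def Inr using dots(2,4)[OF x] by simp
    also have "\<dots> = (1/4) * (\<Sum>z\<in>D1. dl x z * sv z c) + (1/4) * (\<Sum>z\<in>D1. dl (opp x) z * sv z c) - (1/4) * (\<Sum>z\<in>D1. a x z * sv z c)"
      by (simp add: algebra_simps sum_subtractf sum.distrib sum_distrib_left)
    also have "\<dots> = sv x c" using sum_dl_D1[OF x] sum_dl_D1[OF oppD1[OF x]] sv_opp[OF x]
      sum_a_D1[of x "\<lambda>z. sv z c"] sum_nb1_sv[OF x c] by simp
    finally show ?thesis unfolding Inr fam_def by simp
  qed
qed

lemma sum_dv: "x \<in> D1 \<Longrightarrow> (\<Sum>c\<in>C. dv x c) = 0"
proof -
  assume x: "x \<in> D1"
  then have "x \<in> D" "opp x \<in> D" using oppD1[OF x] D1D by auto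
  then show ?thesis unfolding dv_def using sum_v[of x] sum_v[of "opp x"]
    by (simp add: sum_divide_distrib[symmetric] sum_subtractf)
qed
lemma sum_sv: "x \<in> D1 \<Longrightarrow> (\<Sum>c\<in>C. sv x c) = 0"
proof -
  assume x: "x \<in> D1"
  then have "x \<in> D" "opp x \<in> D" using oppD1[OF x] D1D by auto
  then show ?thesis unfolding sv_def using sum_v[of x] sum_v[of "opp x"]
    by (simp add: sum_divide_distrib[symmetric] sum.distrib)
qed

lemma sum_fam: "i \<in> II \<Longrightarrow> (\<Sum>c\<in>C. fam i c) = 0"
  unfolding II_def fam_def using sum_dv sum_sv by auto

lemma dvsv: "dv x c * dv x c + sv x c * sv x c = 1"
  unfolding dv_def sv_def using v_sq[of x c] v_sq[of "opp x" c] by (simp add: field_simps power2_eq_square)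

lemma point_bound: assumes p: "p \<in> C" shows "10 \<le> (\<Sum>x\<in>D1. sv x p * sv x p)"
proof -
  define u where "u c = dl p c - 1/16" for c
  have ipu: "(\<Sum>c\<in>C. u c * fam i c) = fam i p" if i: "i \<in> II" for i
  proof -
    have "(\<Sum>c\<in>C. u c * fam i c) = (\<Sum>c\<in>C. dl p c * fam i c) - (1/16) * (\<Sum>c\<in>C. fam i c)"
      unfolding u_def by (simp add: algebra_simps sum_subtractf sum_distrib_left)
    also have "(\<Sum>c\<in>C. dl p c * fam i c) = fam i p"
    proof -
      have "(\<Sum>c\<in>C. dl p c * fam i c) = (\<Sum>c\<in>C. if c = p then fam i c else 0)" unfolding dl_def by (intro sum.cong) auto
      also have "\<dots> = fam i p" using finC p by (simp add: sum.delta')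
      finally show ?thesis .
    qed
    finally show ?thesis using sum_fam[OF i] by simp
  qed
  have uu: "(\<Sum>c\<in>C. u c * u c) = 15/16"
  proof -
    have "(\<Sum>c\<in>C. u c * u c) = (\<Sum>c\<in>C. (1 - 1/8) * dl p c + 1/256)"
      unfolding u_def by (intro sum.cong refl) (simp add: dl_def)
    also have "\<dots> = (7/8) * (\<Sum>c\<in>C. dl p c) + 16/256" using cardC by (simp add: sum.distrib sum_distrib_left)
    also have "(\<Sum>c\<in>C. dl p c) = 1"
    proof -
      have "(\<Sum>c\<in>C. dl p c) = (\<Sum>c\<in>C. if c = p then 1 else 0)" unfolding dl_def by (intro sum.cong) auto
      also have "\<dots> = 1" using finC p by (simp add: sum.delta')
      finally show ?thesis .
    qed
    finally show ?thesis by simp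
  qed
  have "(\<Sum>i\<in>II. lamf i * ((\<Sum>c\<in>C. u c * fam i c) * (\<Sum>c\<in>C. u c * fam i c))) \<le> (\<Sum>c\<in>C. u c * u c)"
    by (rule bessel_gen[OF finC finII proj])
  also have "(\<Sum>i\<in>II. lamf i * ((\<Sum>c\<in>C. u c * fam i c) * (\<Sum>c\<in>C. u c * fam i c))) = (\<Sum>i\<in>II. lamf i * (fam i p * fam i p))"
    by (intro sum.cong refl) (simp add: ipu)
  also have "\<dots> = (\<Sum>x\<in>D1. (1/16) * (dv x p * dv x p)) + (\<Sum>x\<in>D1. (1/32) * (sv x p * sv x p))"
    unfolding sumII lamf_def fam_def by simp
  also have "(\<Sum>x\<in>D1. (1/16) * (dv x p * dv x p)) = (\<Sum>x\<in>D1. (1/16) * (1 - sv x p * sv x p))"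
    by (intro sum.cong refl) (use dvsv[of _ p] in \<open>simp add: algebra_simps\<close>)
  finally have h: "(\<Sum>x\<in>D1. (1/16) * (1 - sv x p * sv x p)) + (\<Sum>x\<in>D1. (1/32) * (sv x p * sv x p)) \<le> 15/16"
    using uu by simp
  define N where "N = (\<Sum>x\<in>D1. sv x p * sv x p)"
  have e1: "(\<Sum>x\<in>D1. (1/16) * (1 - sv x p * sv x p)) = (1/16) * (20 - N)"
    unfolding N_def using card_D1 by (simp only: sum_distrib_left[symmetric] sum_subtractf) simp
  have e2: "(\<Sum>x\<in>D1. (1/32) * (sv x p * sv x p)) = (1/32) * N"
    unfolding N_def by (simp only: sum_distrib_left[symmetric])
  have "(1/16) * (20 - N) + (1/32) * N \<le> 15/16" using h unfolding e1 e2 .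
  then have "10 \<le> N" by (simp add: field_simps)
  then show ?thesis unfolding N_def .
qed

lemma total_sv: "(\<Sum>p\<in>C. \<Sum>x\<in>D1. sv x p * sv x p) = 160"
proof -
  have "(\<Sum>p\<in>C. \<Sum>x\<in>D1. sv x p * sv x p) = (\<Sum>x\<in>D1. ip (sv x) (sv x))" unfolding ip_def by (rule sum.swap)
  also have "\<dots> = (\<Sum>x\<in>D1. 8)"
  proof (intro sum.cong refl)
    fix x assume x: "x \<in> D1"
    show "ip (sv x) (sv x) = 8" using dots(2)[OF x x] opp(2)[OF x] unfolding dl_def a_def using irr by simp
  qed
  finally show ?thesis using card_D1 by simp
qed

lemma point_eq: assumes p: "p \<in> C" shows "(\<Sum>x\<in>D1. sv x p * sv x p) = 10"
proof -
  have "(\<Sum>p\<in>C. (\<Sum>x\<in>D1. sv x p * sv x p) - 10) = 0" using total_sv cardC by (simp add: sum_subtractf)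
  then have "\<forall>p\<in>C. (\<Sum>x\<in>D1. sv x p * sv x p) - 10 = 0"
    using sum_nonneg_eq_0_iff[OF finC, of "\<lambda>p. (\<Sum>x\<in>D1. sv x p * sv x p) - 10"] point_bound by auto
  then show ?thesis using p by simp
qed

definition Ap where "Ap p = {x\<in>D1. v x p = v (opp x) p}"

lemma card_Ap: assumes p: "p \<in> C" shows "card (Ap p) = 10"
proof -
  have "(\<Sum>x\<in>D1. sv x p * sv x p) = (\<Sum>x\<in>D1. if v x p = v (opp x) p then 1 else 0)"
  proof (intro sum.cong refl)
    fix x assume x: "x \<in> D1"
    show "sv x p * sv x p = (if v x p = v (opp x) p then 1 else 0)"
      unfolding sv_def using v_pm[of x p] v_pm[of "opp x" p] by auto
  qed
  also have "\<dots> = real (card (Ap p))" unfolding Ap_def by (rule sum_ind[OF finD1])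
  finally show ?thesis using point_eq[OF p] by simp
qed

definition Qd where "Qd x = insert x (insert (opp x) (nb1 x))"

lemma Qd_struct: assumes x: "x \<in> D1"
  obtains y where "y \<in> nb1 x" "nb1 x = {y, opp y}" "opp y \<noteq> y"
proof -
  obtain y1 y2 where y: "nb1 x = {y1, y2}" "y1 \<noteq> y2" using nb1_two[OF x] by blast
  have y1n: "y1 \<in> nb1 x" using y by auto
  note on = opp_nb[OF x y1n]
  have "nb1 x = {y1, opp y1}" using card2_eq[OF card_nb1[OF x] y1n on(1)] on(2) by metis
  then show ?thesis using that y1n on(2) by blast
qed

lemma Qd_card: assumes x: "x \<in> D1" shows "card (Qd x) = 4"
proof -
  obtain y where y: "y \<in> nb1 x" "nb1 x = {y, opp y}" "opp y \<noteq> y" using Qd_struct[OF x] by blast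
  have oyn: "opp y \<in> nb1 x" using y by auto
  note n1 = nb1_not[OF x y(1)] and n2 = nb1_not[OF x oyn]
  have "x \<noteq> opp x" using opp(2)[OF x] by auto
  then show ?thesis unfolding Qd_def y(2) using n1 n2 y(3) by auto
qed

lemma Qd_sub: "x \<in> D1 \<Longrightarrow> Qd x \<subseteq> D1" unfolding Qd_def using oppD1 nb1_sub by auto

lemma Qd_eq: assumes x: "x \<in> D1" and w: "w \<in> Qd x" shows "Qd w = Qd x"
proof -
  obtain y where y: "y \<in> nb1 x" "nb1 x = {y, opp y}" "opp y \<noteq> y" using Qd_struct[OF x] by blast
  consider "w = x" | "w = opp x" | "w \<in> nb1 x" using w unfolding Qd_def by auto
  then show ?thesis
  proof cases
    case 1 then show ?thesis by simp
  next
    case 2 then show ?thesis unfolding Qd_def using opp_opp[OF x] opp(3)[OF x] by auto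
  next
    case 3
    have wD: "w \<in> D1" using 3 nb1_sub by auto
    have nbw: "nb1 w = {x, opp x}" using nb_struct[OF x 3] .
    have "opp w \<in> nb1 x" "opp w \<noteq> w" using opp_nb[OF x 3] by auto
    then have "nb1 x = {w, opp w}" using card2_eq[OF card_nb1[OF x] 3] by metis
    then show ?thesis unfolding Qd_def nbw by auto
  qed
qed

lemma card_mult4: assumes A: "A \<subseteq> D1" and cl: "\<And>x. x \<in> A \<Longrightarrow> Qd x \<subseteq> A"
  shows "card A = 4 * card (Qd ` A)"
proof -
  have U: "\<Union>(Qd ` A) = A" using cl unfolding Qd_def by blast
  have disj: "pairwise disjnt (Qd ` A)"
  proof (unfold pairwise_def disjnt_def, intro ballI impI)
    fix K K' assume K: "K \<in> Qd ` A" and K': "K' \<in> Qd ` A" and ne: "K \<noteq> K'"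
    obtain x where x: "x \<in> A" "K = Qd x" using K by auto
    obtain x' where x': "x' \<in> A" "K' = Qd x'" using K' by auto
    show "K \<inter> K' = {}"
    proof (rule ccontr)
      assume "K \<inter> K' \<noteq> {}"
      then obtain w where "w \<in> Qd x" "w \<in> Qd x'" using x x' by auto
      then have "Qd x = Qd x'" using Qd_eq[of x w] Qd_eq[of x' w] x x' A by auto
      then show False using ne x x' by simp
    qed
  qed
  have fin: "\<And>K. K \<in> Qd ` A \<Longrightarrow> finite K" using Qd_sub A finD1 finite_subset by blast
  have "card A = sum card (Qd ` A)" using card_Union_disjoint[OF disj fin] U by simp
  also have "\<dots> = sum (\<lambda>_. 4) (Qd ` A)" by (intro sum.cong refl) (use Qd_card A in auto)
  finally show ?thesis by simp
qed

lemma Ap_closed: assumes p: "p \<in> C" and x: "x \<in> Ap p" shows "Qd x \<subseteq> Ap p"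
proof -
  have xD: "x \<in> D1" and eq: "v x p = v (opp x) p" using x unfolding Ap_def by auto
  have "opp x \<in> Ap p" unfolding Ap_def using oppD1[OF xD] opp_opp[OF xD] eq by simp
  moreover have "y \<in> Ap p" if y: "y \<in> nb1 x" for y
  proof -
    have yD: "y \<in> D1" using y nb1_sub by auto
    have "v x p + v (opp x) p + v y p + v (opp y) p = 0" using quad_sum[OF xD y p] .
    then have "v y p = v (opp y) p" using eq v_pm[of x p] v_pm[of y p] v_pm[of "opp y" p] by auto
    then show ?thesis unfolding Ap_def using yD by simp
  qed
  ultimately show ?thesis unfolding Qd_def using x by auto
qed

lemma contradiction: False
proof -
  obtain p where p: "p \<in> C" using Cne by auto
  have "card (Ap p) = 4 * card (Qd ` Ap p)"
    by (rule card_mult4) (use Ap_closed[OF p] in \<open>auto simp: Ap_def\<close>)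
  then show False using card_Ap[OF p] by presburger
qed

end

theorem mainTheorem17:
  fixes V :: "'a set" and E :: "'a \<Rightarrow> 'a \<Rightarrow> bool"
  assumes "strongly_regular V E 76 30 8 14"
  shows "\<not> (\<exists>C. coclique V E C \<and> card C = 16)"
proof
  assume "\<exists>C. coclique V E C \<and> card C = 16"
  then obtain C where "coclique V E C" "card C = 16" by blast
  then interpret srgC V E C using assms by unfold_locales auto
  show False by (rule contradiction)
qed

end
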